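(* Let $H$ be an $n$-Hilbert space, fix $a_2,\dots,a_n\in H$, let $C\in\mathcal{GB}(H_F)$, and let $\{f_i\}_{i=1}^\infty$ be a $C$-controlled frame associated to $(a_2,\dots,a_n)$ for $H$ with $C$-controlled frame operator $S_C$. Suppose $S_C^{-1}$ commutes with $C$. Then $\{S_C^{-1/2}f_i\}_{i=1}^\infty$ is a $C$-controlled Parseval frame associated to $(a_2,\dots,a_n)$ for $H$.
   Context: Let $n\ge 2$ and let $H$ be a complex $n$-Hilbert space with $n$-inner product $\langle\cdot,\cdot\,|\,\cdot,\dots,\cdot\rangle$ and induced $n$-norm $\|x_1,\dots,x_n\|=\langle x_1,x_1|x_2,\dots,x_n\rangle^{1/2}$. Fix $a_2,\dots,a_n\in H$, put $F=\{a_2,\dots,a_n\}$ and let $L_F$ be its linear span. Then $\langle x,y\rangle_F:=\langle x,y|a_2,\dots,a_n\rangle$ is a semi-inner product on $H$ inducing an inner product on $H/L_F$; identifying $H/L_F$ with an algebraic complement $M_F$ of $L_F$ in $H$, $H_F$ denotes the Hilbert space completion of $M_F$; its inner product and norm are written $\langle f,g|a_2,\dots,a_n\rangle$ and $\|f,a_2,\dots,a_n\|$. $\mathcal{GB}(H_F)$ is the set of bounded linear operators on $H_F$ with bounded inverse. For $C\in\mathcal{GB}(H_F)$, $\{f_i\}$ in $H$ is a $C$-controlled frame associated to $(a_2,\dots,a_n)$ for $H$ if there are $0<A\le B<\infty$ with $A\|f,a_2,\dots,a_n\|^2\le\sum_i\langle f,f_i|a_2,\dots,a_n\rangle\langle Cf_i,f|a_2,\dots,a_n\rangle\le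 B\|f,a_2,\dots,a_n\|^2$ for all $f\in H_F$; it is a $C$-controlled Parseval frame if this holds with $A=B=1$. Its $C$-controlled frame operator is $S_C:H_F\to H_F$, $S_Cf=\sum_i\langle f,f_i|a_2,\dots,a_n\rangle Cf_i$; it satisfies $A\,I\le S_C\le B\,I$, is positive and invertible, and $S_C^{-1/2}$ denotes the positive square root of $S_C^{-1}$. *)

theory Defs
  imports Complex_Main "HOL-Library.Multiset"
begin

text \<open>The n-inner product is modelled as ip x y zs = <x,y|z2,...,zn>, with zs a list of
 length n-1.  The complex vector space structure on H is given by the scaling sa.\<close>

definition lin_dep_list :: "(complex \<Rightarrow> 'a \<Rightarrow> 'a::ab_group_add) \<Rightarrow> 'a list \<Rightarrow> bool" where
  "lin_dep_list sc vs \<longleftrightarrow>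
     (\<exists>c::nat \<Rightarrow> complex. (\<exists>k<length vs. c k \<noteq> 0) \<and> (\<Sum>k<length vs. sc (c k) (vs ! k)) = 0)"

definition n_inner_product ::
  "(complex \<Rightarrow> 'a \<Rightarrow> 'a::ab_group_add) \<Rightarrow> nat \<Rightarrow> ('a \<Rightarrow> 'a \<Rightarrow> 'a list \<Rightarrow> complex) \<Rightarrow> bool" where
  "n_inner_product sc n ip \<longleftrightarrow>
     vector_space sc \<and>
     (\<forall>x zs. length zs = n - 1 \<longrightarrow> Im (ip x x zs) = 0 \<and> Re (ip x x zs) \<ge> 0) \<and>
     (\<forall>x zs. length zs = n - 1 \<longrightarrow> (ip x x zs = 0 \<longleftrightarrow> lin_dep_list sc (x # zs))) \<and>
     (\<forall>x y zs zs'. length zs = n - 1 \<longrightarrow> mset zs' = mset zs \<longrightarrow> ip x y zs' = ip x y zs) \<and>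
     (\<forall>x z zs. length zs = n - 2 \<longrightarrow> ip x x (z # zs) = ip z z (x # zs)) \<and>
     (\<forall>x y zs. length zs = n - 1 \<longrightarrow> ip x y zs = cnj (ip y x zs)) \<and>
     (\<forall>\<alpha> x y zs. length zs = n - 1 \<longrightarrow> ip (sc \<alpha> x) y zs = \<alpha> * ip x y zs) \<and>
     (\<forall>x x' y zs. length zs = n - 1 \<longrightarrow> ip (x + x') y zs = ip x y zs + ip x' y zs)"

definition n_norm :: "('a \<Rightarrow> 'a \<Rightarrow> 'a list \<Rightarrow> complex) \<Rightarrow> 'a \<Rightarrow> 'a list \<Rightarrow> real" where
  "n_norm ip x zs = sqrt (Re (ip x x zs))"

definition n_hilbert_space ::
  "(complex \<Rightarrow> 'a \<Rightarrow> 'a::ab_group_add) \<Rightarrow> nat \<Rightarrow> ('a \<Rightarrow> 'a \<Rightarrow> 'a list \<Rightarrow> complex) \<Rightarrow> bool" where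
  "n_hilbert_space sc n ip \<longleftrightarrow>
     n \<ge> 2 \<and> n_inner_product sc n ip \<and>
     (\<forall>x::nat \<Rightarrow> 'a.
        (\<forall>zs. length zs = n - 1 \<longrightarrow>
           (\<forall>e>0. \<exists>N. \<forall>k\<ge>N. \<forall>m\<ge>N. n_norm ip (x k - x m) zs < e))
        \<longrightarrow> (\<exists>L. \<forall>zs. length zs = n - 1 \<longrightarrow> (\<lambda>k. n_norm ip (x k - L) zs) \<longlonglongrightarrow> 0))"

definition hnorm :: "('b \<Rightarrow> 'b \<Rightarrow> complex) \<Rightarrow> 'b \<Rightarrow> real" where
  "hnorm ipF x = sqrt (Re (ipF x x))"

definition hconv :: "('b \<Rightarrow> 'b \<Rightarrow> complex) \<Rightarrow> (nat \<Rightarrow> 'b::ab_group_add) \<Rightarrow> 'b \<Rightarrow> bool" where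
  "hconv ipF s L \<longleftrightarrow> (\<lambda>k. hnorm ipF (s k - L)) \<longlonglongrightarrow> 0"

definition hilbert_space :: "(complex \<Rightarrow> 'b \<Rightarrow> 'b::ab_group_add) \<Rightarrow> ('b \<Rightarrow> 'b \<Rightarrow> complex) \<Rightarrow> bool" where
  "hilbert_space sc ipF \<longleftrightarrow>
     vector_space sc \<and>
     (\<forall>x y. ipF x y = cnj (ipF y x)) \<and>
     (\<forall>\<alpha> x y. ipF (sc \<alpha> x) y = \<alpha> * ipF x y) \<and>
     (\<forall>x x' y. ipF (x + x') y = ipF x y + ipF x' y) \<and>
     (\<forall>x. Im (ipF x x) = 0 \<and> Re (ipF x x) \<ge> 0) \<and>
     (\<forall>x. ipF x x = 0 \<longrightarrow> x = 0) \<and>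
     (\<forall>s::nat \<Rightarrow> 'b. (\<forall>e>0. \<exists>N. \<forall>k\<ge>N. \<forall>m\<ge>N. hnorm ipF (s k - s m) < e)
          \<longrightarrow> (\<exists>L. hconv ipF s L))"

text \<open>H_F: a Hilbert space (sb, ipF) together with the canonical map j : H \<rightarrow> H_F
 (H \<rightarrow> H/L_F \<cong> M_F \<subseteq> H_F), which is linear, carries <.,.|a2,...,an> to the inner
 product of H_F, and has dense range.  This characterises the completion H_F up to
 unitary isomorphism.\<close>
definition HF_completion ::
  "(complex \<Rightarrow> 'a \<Rightarrow> 'a::ab_group_add) \<Rightarrow> ('a \<Rightarrow> 'a \<Rightarrow> 'a list \<Rightarrow> complex) \<Rightarrow> 'a list \<Rightarrow>
   (complex \<Rightarrow> 'b \<Rightarrow> 'b::ab_group_add) \<Rightarrow> ('b \<Rightarrow> 'b \<Rightarrow> complex) \<Rightarrow> ('a \<Rightarrow> 'b) \<Rightarrow> bool" where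
  "HF_completion sa ip as sb ipF j \<longleftrightarrow>
     hilbert_space sb ipF \<and>
     Vector_Spaces.linear sa sb j \<and>
     (\<forall>x y. ipF (j x) (j y) = ip x y as) \<and>
     (\<forall>g. \<forall>e>0. \<exists>x. hnorm ipF (g - j x) < e)"

definition bounded_op :: "(complex \<Rightarrow> 'b \<Rightarrow> 'b::ab_group_add) \<Rightarrow> ('b \<Rightarrow> 'b \<Rightarrow> complex) \<Rightarrow> ('b \<Rightarrow> 'b) \<Rightarrow> bool" where
  "bounded_op sb ipF T \<longleftrightarrow> Vector_Spaces.linear sb sb T \<and> (\<exists>K. \<forall>x. hnorm ipF (T x) \<le> K * hnorm ipF x)"

definition GB :: "(complex \<Rightarrow> 'b \<Rightarrow> 'b::ab_group_add) \<Rightarrow> ('b \<Rightarrow> 'b \<Rightarrow> complex) \<Rightarrow> ('b \<Rightarrow> 'b) set" where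
  "GB sb ipF = {T. bounded_op sb ipF T \<and> bij T \<and> bounded_op sb ipF (inv T)}"

definition positive_op :: "('b \<Rightarrow> 'b \<Rightarrow> complex) \<Rightarrow> ('b \<Rightarrow> 'b) \<Rightarrow> bool" where
  "positive_op ipF T \<longleftrightarrow> (\<forall>x. Im (ipF (T x) x) = 0 \<and> Re (ipF (T x) x) \<ge> 0)"

definition pos_sqrt :: "(complex \<Rightarrow> 'b \<Rightarrow> 'b::ab_group_add) \<Rightarrow> ('b \<Rightarrow> 'b \<Rightarrow> complex) \<Rightarrow> ('b \<Rightarrow> 'b) \<Rightarrow> ('b \<Rightarrow> 'b)" where
  "pos_sqrt sb ipF T = (THE R. bounded_op sb ipF R \<and> positive_op ipF R \<and> R \<circ> R = T)"

definition ctrl_frame_bounds :: "('b \<Rightarrow> 'b \<Rightarrow> complex) \<Rightarrow> ('b \<Rightarrow> 'b) \<Rightarrow> (nat \<Rightarrow> 'b) \<Rightarrow> real \<Rightarrow> real \<Rightarrow> bool" where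
  "ctrl_frame_bounds ipF C h A B \<longleftrightarrow>
     (\<forall>g. \<exists>s. (\<lambda>i. ipF g (h i) * ipF (C (h i)) g) sums s \<and> Im s = 0 \<and>
            A * (hnorm ipF g)\<^sup>2 \<le> Re s \<and> Re s \<le> B * (hnorm ipF g)\<^sup>2)"

definition ctrl_frame :: "('b \<Rightarrow> 'b \<Rightarrow> complex) \<Rightarrow> ('b \<Rightarrow> 'b) \<Rightarrow> (nat \<Rightarrow> 'b) \<Rightarrow> bool" where
  "ctrl_frame ipF C h \<longleftrightarrow> (\<exists>A B. 0 < A \<and> A \<le> B \<and> ctrl_frame_bounds ipF C h A B)"

definition ctrl_parseval_frame :: "('b \<Rightarrow> 'b \<Rightarrow> complex) \<Rightarrow> ('b \<Rightarrow> 'b) \<Rightarrow> (nat \<Rightarrow> 'b) \<Rightarrow> bool" where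
  "ctrl_parseval_frame ipF C h \<longleftrightarrow> ctrl_frame_bounds ipF C h 1 1"

definition ctrl_frame_op ::
  "(complex \<Rightarrow> 'b \<Rightarrow> 'b::ab_group_add) \<Rightarrow> ('b \<Rightarrow> 'b \<Rightarrow> complex) \<Rightarrow> ('b \<Rightarrow> 'b) \<Rightarrow> (nat \<Rightarrow> 'b) \<Rightarrow> 'b \<Rightarrow> 'b" where
  "ctrl_frame_op sb ipF C h g = (THE L. hconv ipF (\<lambda>N. \<Sum>i<N. sb (ipF g (h i)) (C (h i))) L)"

end

theory Submission
  imports Defs "HOL-Computational_Algebra.Polynomial"
begin

lemma lin_iff: "Vector_Spaces.linear s s f \<longleftrightarrow>
  (vector_space s \<and> (\<forall>x y. f (x + y) = f x + f y) \<and> (\<forall>c x. f (s c x) = s c (f x)))"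
  by (auto simp: Vector_Spaces.linear_iff)

lemma real_quad_aux:
  fixes a c b :: real
  assumes "\<And>s. 0 \<le> a - 2*s*c + s^2*c*b" "c \<ge> 0" "b \<ge> 0"
  shows "c \<le> a * b"
proof (cases "c = 0")
  case True then show ?thesis using assms(1)[of 0] \<open>b\<ge>0\<close> by simp
next
  case False
  hence cp: "c > 0" using assms by simp
  show ?thesis
  proof (cases "b = 0")
    case True
    have "0 \<le> a - 2*((a+1)/(2*c))*c" using assms(1)[of "(a+1)/(2*c)"] True by simp
    also have "\<dots> = -1" using cp by (simp add: field_simps)
    finally show ?thesis by simp
  next
    case False
    hence bp: "b > 0" using assms by simp
    have "0 \<le> a - 2*(1/b)*c + (1/b)^2*c*b" using assms(1) by blast
    also have "\<dots> = a - c/b" using bp by (simp add: field_simps power2_eq_square)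
    finally show ?thesis using bp by (simp add: field_simps)
  qed
qed

locale hs =
  fixes sb :: "complex \<Rightarrow> 'b::ab_group_add \<Rightarrow> 'b" and ipF :: "'b \<Rightarrow> 'b \<Rightarrow> complex"
  assumes H: "hilbert_space sb ipF"
begin

lemma vs: "vector_space sb" using H unfolding hilbert_space_def by blast

sublocale V: vector_space sb by (rule vs)

lemma ip_cnj: "ipF x y = cnj (ipF y x)" using H unfolding hilbert_space_def by blast
lemma ip_scale_l[simp]: "ipF (sb a x) y = a * ipF x y" using H unfolding hilbert_space_def by blast
lemma ip_add_l[simp]: "ipF (x + x') y = ipF x y + ipF x' y" using H unfolding hilbert_space_def by blast
lemma ip_self_Im[simp]: "Im (ipF x x) = 0" using H unfolding hilbert_space_def by blast
lemma ip_self_Re: "Re (ipF x x) \<ge> 0" using H unfolding hilbert_space_def by blast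
lemma ip_self_eq0: "ipF x x = 0 \<Longrightarrow> x = 0" using H unfolding hilbert_space_def by blast
lemma complete: "(\<forall>e>0. \<exists>N. \<forall>k\<ge>N. \<forall>m\<ge>N. hnorm ipF (s k - s m) < e) \<Longrightarrow> \<exists>L. hconv ipF s L"
  using H unfolding hilbert_space_def by blast

lemma ip_add_r[simp]: "ipF x (y + y') = ipF x y + ipF x y'"
  by (subst ip_cnj) (simp add: ip_cnj[of y x] ip_cnj[of y' x])
lemma ip_scale_r[simp]: "ipF x (sb a y) = cnj a * ipF x y"
  by (subst ip_cnj) (simp add: ip_cnj[of y x])
lemma ip_zero_l[simp]: "ipF 0 y = 0"
  using ip_add_l[of 0 0 y] by simp
lemma ip_zero_r[simp]: "ipF x 0 = 0"
  using ip_add_r[of x 0 0] by simp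
lemma ip_minus_l[simp]: "ipF (- x) y = - ipF x y"
  using ip_add_l[of x "-x" y] by (simp add: eq_neg_iff_add_eq_0 add.commute)
lemma ip_minus_r[simp]: "ipF x (- y) = - ipF x y"
  using ip_add_r[of x y "-y"] by (simp add: eq_neg_iff_add_eq_0 add.commute)
lemma ip_diff_l[simp]: "ipF (x - x') y = ipF x y - ipF x' y"
  using ip_add_l[of x "-x'" y] by simp
lemma ip_diff_r[simp]: "ipF x (y - y') = ipF x y - ipF x y'"
  using ip_add_r[of x y "-y'"] by simp
lemma ip_sum_l: "ipF (\<Sum>i\<in>I. f i) y = (\<Sum>i\<in>I. ipF (f i) y)"
  by (induct I rule: infinite_finite_induct) auto
lemma ip_sum_r: "ipF y (\<Sum>i\<in>I. f i) = (\<Sum>i\<in>I. ipF y (f i))"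
  by (induct I rule: infinite_finite_induct) auto

abbreviation nm :: "'b \<Rightarrow> real" where "nm x \<equiv> hnorm ipF x"

lemma nm_ge0[simp]: "nm x \<ge> 0" by (simp add: hnorm_def ip_self_Re)
lemma nm_sq: "(nm x)^2 = Re (ipF x x)"
  using ip_self_Re[of x] by (simp add: hnorm_def)
lemma ip_self: "ipF x x = complex_of_real ((nm x)^2)"
  using nm_sq[of x] ip_self_Im[of x] by (simp add: complex_eq_iff)
lemma ip_sq_norm: "ipF x y * ipF y x = (complex_of_real (cmod (ipF x y)))^2"
  using complex_norm_square[of "ipF x y"] ip_cnj[of y x] by simp

lemma cm_self: "cmod (ipF x x) = (nm x)^2"
  using ip_self[of x] by (metis abs_of_nonneg norm_of_real zero_le_power2)
lemma nm_zero[simp]: "nm 0 = 0" by (simp add: hnorm_def)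
lemma nm_eq0: "nm x = 0 \<longleftrightarrow> x = 0"
  using ip_self[of x] ip_self_eq0[of x] by auto

lemma cs: "cmod (ipF x y) \<le> nm x * nm y"
proof -
  have "(cmod (ipF x y))^2 \<le> (nm x)^2 * (nm y)^2"
  proof (rule real_quad_aux)
    fix s :: real
    let ?t = "- complex_of_real s * ipF x y"
    have "0 \<le> Re (ipF (x + sb ?t y) (x + sb ?t y))" by (rule ip_self_Re)
    also have "ipF (x + sb ?t y) (x + sb ?t y) = ipF x x + cnj ?t * ipF x y + ?t * ipF y x + ?t * cnj ?t * ipF y y"
      by (simp add: algebra_simps)
    also have "Re \<dots> = (nm x)^2 - 2*s*(cmod (ipF x y))^2 + s^2*(cmod (ipF x y))^2*(nm y)^2"
      apply (subst ip_cnj[of y x])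
      apply (simp add: ip_self)
      apply (simp add: power2_eq_square algebra_simps)
      using cmod_power2[of "ipF x y"] by (simp add: power2_eq_square algebra_simps)
    finally show "0 \<le> (nm x)^2 - 2*s*(cmod (ipF x y))^2 + s^2*(cmod (ipF x y))^2*(nm y)^2" .
  qed auto
  hence "(cmod (ipF x y))^2 \<le> (nm x * nm y)^2" by (simp add: power_mult_distrib)
  thus ?thesis by (rule power2_le_imp_le) simp
qed

lemma nm_add_sq: "(nm (x+y))^2 = (nm x)^2 + 2 * Re (ipF x y) + (nm y)^2"
proof -
  have "Re (ipF y x) = Re (ipF x y)" by (subst ip_cnj) simp
  thus ?thesis by (simp add: nm_sq)
qed

lemma nm_triangle: "nm (x + y) \<le> nm x + nm y"
proof -
  have "Re (ipF x y) \<le> nm x * nm y" using cs[of x y] complex_Re_le_cmod[of "ipF x y"] by linarith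
  hence "(nm (x+y))^2 \<le> (nm x)^2 + 2*(nm x*nm y) + (nm y)^2" using nm_add_sq[of x y] by linarith
  also have "\<dots> = (nm x + nm y)^2" by (simp add: power2_eq_square algebra_simps)
  finally have "(nm (x+y))^2 \<le> (nm x + nm y)^2" .
  thus ?thesis by (rule power2_le_imp_le) simp
qed

lemma nm_scale[simp]: "nm (sb a x) = cmod a * nm x"
proof -
  have c: "cnj a * a = complex_of_real ((cmod a)^2)" by (metis complex_norm_square mult.commute)
  have eq: "ipF (sb a x) (sb a x) = complex_of_real ((cmod a)^2) * ipF x x"
    by (simp add: c mult.assoc[symmetric])
  have "(nm (sb a x))^2 = Re (ipF (sb a x) (sb a x))" by (rule nm_sq)
  also have "\<dots> = Re (complex_of_real ((cmod a)^2) * ipF x x)" by (simp only: eq)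
  also have "\<dots> = (cmod a)^2 * (nm x)^2" by (simp add: nm_sq)
  finally have "(nm (sb a x))^2 = (cmod a * nm x)^2" by (simp add: power_mult_distrib)
  thus ?thesis by (simp add: power2_eq_iff_nonneg)
qed

lemma nm_minus[simp]: "nm (- x) = nm x" by (simp add: hnorm_def)
lemma nm_diff_comm: "nm (x - y) = nm (y - x)"
  using nm_minus[of "x - y"] by simp
lemma nm_diff_tri: "nm (x - z) \<le> nm (x - y) + nm (y - z)"
  using nm_triangle[of "x - y" "y - z"] by simp
lemma nm_rev: "\<bar>nm x - nm y\<bar> \<le> nm (x - y)"
  using nm_triangle[of "x - y" y] nm_triangle[of "y - x" x] nm_diff_comm[of x y] by auto
lemma nm_diff_le: "nm (x - y) \<le> nm x + nm y"
  using nm_triangle[of x "-y"] by simp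

lemma null_cmp: assumes a: "(f \<longlonglongrightarrow> (0::real))" and b: "(\<And>k. norm (g k) \<le> f k)" shows "(g \<longlonglongrightarrow> 0)"
proof (rule tendsto_0_le[where K=1, OF a])
  have "\<forall>k. norm (g k) \<le> norm (f k) * 1" using b by (metis mult.right_neutral real_norm_def abs_ge_self order_trans)
  thus "\<forall>\<^sub>F x in sequentially. norm (g x) \<le> norm (f x) * 1" by (simp add: always_eventually)
qed

lemma conv_def': "hconv ipF s L \<longleftrightarrow> (\<lambda>k. nm (s k - L)) \<longlonglongrightarrow> 0"
  by (simp add: hconv_def)

lemma conv_unique: assumes "hconv ipF s L" "hconv ipF s L'" shows "L = L'"
proof -
  have t: "(\<lambda>k. nm (s k - L) + nm (s k - L')) \<longlonglongrightarrow> 0"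
    using assms tendsto_add[of "\<lambda>k. nm (s k - L)" 0 sequentially "\<lambda>k. nm (s k - L')" 0]
    by (simp add: hconv_def)
  have "nm (L - L') \<le> 0"
  proof (rule LIMSEQ_le_const[OF t], intro exI allI impI)
    fix k show "nm (L - L') \<le> nm (s k - L) + nm (s k - L')"
      using nm_diff_tri[of L L' "s k"] nm_diff_comm[of L "s k"] by simp
  qed
  hence "nm (L - L') = 0" using nm_ge0[of "L - L'"] by linarith
  thus ?thesis by (simp add: nm_eq0)
qed

lemma conv_ip: assumes "hconv ipF s L" shows "(\<lambda>k. ipF (s k) y) \<longlonglongrightarrow> ipF L y"
proof (rule LIM_zero_cancel, rule null_cmp)
  show "(\<lambda>k. nm (s k - L) * nm y) \<longlonglongrightarrow> 0"
    using assms tendsto_mult_left_zero[of "\<lambda>k. nm (s k - L)" sequentially "nm y"] by (simp add: hconv_def)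
  fix k show "norm (ipF (s k) y - ipF L y) \<le> nm (s k - L) * nm y"
    using cs[of "s k - L" y] by simp
qed

lemma conv_ip_r: assumes "hconv ipF s L" shows "(\<lambda>k. ipF y (s k)) \<longlonglongrightarrow> ipF y L"
proof -
  have "(\<lambda>k. cnj (ipF (s k) y)) \<longlonglongrightarrow> cnj (ipF L y)" by (intro tendsto_cnj conv_ip assms)
  thus ?thesis by (subst (1 2) ip_cnj) simp
qed

lemma conv_nm: assumes "hconv ipF s L" shows "(\<lambda>k. nm (s k)) \<longlonglongrightarrow> nm L"
proof (rule LIM_zero_cancel, rule null_cmp)
  show "(\<lambda>k. nm (s k - L)) \<longlonglongrightarrow> 0" using assms by (simp add: hconv_def)
  fix k show "norm (nm (s k) - nm L) \<le> nm (s k - L)" using nm_rev by simp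
qed

lemma conv_add: "hconv ipF s L \<Longrightarrow> hconv ipF t M \<Longrightarrow> hconv ipF (\<lambda>k. s k + t k) (L + M)"
  unfolding hconv_def
proof (rule tendsto_0_le[where K=1])
  assume a: "(\<lambda>k. nm (s k - L)) \<longlonglongrightarrow> 0" "(\<lambda>k. nm (t k - M)) \<longlonglongrightarrow> 0"
  show "(\<lambda>k. nm (s k - L) + nm (t k - M)) \<longlonglongrightarrow> 0" using tendsto_add[OF a] by simp
  show "\<forall>\<^sub>F x in sequentially. norm (nm (s x + t x - (L + M))) \<le> norm (nm (s x - L) + nm (t x - M)) * 1"
    using nm_triangle[of "s _ - L" "t _ - M"] by (simp add: algebra_simps)
qed

lemma conv_scale: "hconv ipF s L \<Longrightarrow> hconv ipF (\<lambda>k. sb a (s k)) (sb a L)"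
  unfolding hconv_def
proof (rule tendsto_0_le[where K="cmod a"])
  assume a: "(\<lambda>k. nm (s k - L)) \<longlonglongrightarrow> 0"
  show "(\<lambda>k. nm (s k - L)) \<longlonglongrightarrow> 0" by (rule a)
  have "sb a (s k) - sb a L = sb a (s k - L)" for k by (simp add: V.scale_right_diff_distrib)
  thus "\<forall>\<^sub>F x in sequentially. norm (nm (sb a (s x) - sb a L)) \<le> norm (nm (s x - L)) * cmod a"
    by (simp add: mult.commute)
qed

lemma conv_const: "hconv ipF (\<lambda>k. c) c" by (simp add: hconv_def)

lemma conv_Suc: "hconv ipF s L \<Longrightarrow> hconv ipF (\<lambda>k. s (Suc k)) L"
  unfolding hconv_def by (rule LIMSEQ_Suc)

abbreviation lin :: "('b \<Rightarrow> 'b) \<Rightarrow> bool" where "lin T \<equiv> Vector_Spaces.linear sb sb T"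

lemma lin_add: "lin T \<Longrightarrow> T (x + y) = T x + T y" by (simp add: lin_iff)
lemma lin_scale: "lin T \<Longrightarrow> T (sb a x) = sb a (T x)" by (simp add: lin_iff)
lemma lin_zero: "lin T \<Longrightarrow> T 0 = 0" using lin_add[of T 0 0] by simp
lemma lin_diff: "lin T \<Longrightarrow> T (x - y) = T x - T y"
  using lin_add[of T "x - y" y] by (simp add: eq_diff_eq)
lemma lin_minus: "lin T \<Longrightarrow> T (- x) = - T x"
  using lin_diff[of T 0 x] lin_zero[of T] by simp
lemma lin_sum: "lin T \<Longrightarrow> T (\<Sum>i\<in>I. f i) = (\<Sum>i\<in>I. T (f i))"
  by (induct I rule: infinite_finite_induct) (auto simp: lin_zero lin_add)
lemma lin_intro: "(\<And>x y. T (x + y) = T x + T y) \<Longrightarrow> (\<And>a x. T (sb a x) = sb a (T x)) \<Longrightarrow> lin T"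
  using vs by (simp add: lin_iff)
lemma lin_id: "lin (\<lambda>x. x)" by (rule lin_intro) auto
lemma lin_comp: "lin T \<Longrightarrow> lin U \<Longrightarrow> lin (\<lambda>x. T (U x))"
  by (rule lin_intro) (simp_all add: lin_add lin_scale)

lemma conv_lin: assumes "lin T" "\<And>x. nm (T x) \<le> K * nm x" "hconv ipF s L"
  shows "hconv ipF (\<lambda>k. T (s k)) (T L)"
  unfolding hconv_def
proof (rule tendsto_0_le[where K="\<bar>K\<bar>"])
  show "(\<lambda>k. nm (s k - L)) \<longlonglongrightarrow> 0" using assms(3) by (simp add: hconv_def)
  have "nm (T (s k) - T L) \<le> nm (s k - L) * \<bar>K\<bar>" for k
  proof -
    have "nm (T (s k) - T L) = nm (T (s k - L))" by (simp add: lin_diff[OF assms(1)])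
    also have "\<dots> \<le> K * nm (s k - L)" by (rule assms(2))
    also have "\<dots> \<le> \<bar>K\<bar> * nm (s k - L)" by (rule mult_right_mono) auto
    finally show ?thesis by (simp add: mult.commute)
  qed
  thus "\<forall>\<^sub>F x in sequentially. norm (nm (T (s x) - T L)) \<le> norm (nm (s x - L)) * \<bar>K\<bar>" by simp
qed

lemma pos_herm: assumes "lin T" "\<And>x. Im (ipF (T x) x) = 0" shows "ipF (T x) y = cnj (ipF (T y) x)"
proof -
  have e1: "ipF (T (x + y)) (x + y) = ipF (T x) x + ipF (T x) y + ipF (T y) x + ipF (T y) y"
    by (simp add: lin_add[OF assms(1)])
  have e2: "ipF (T (x + sb \<i> y)) (x + sb \<i> y) = ipF (T x) x - \<i> * ipF (T x) y + \<i> * ipF (T y) x + ipF (T y) y"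
    by (simp add: lin_add[OF assms(1)] lin_scale[OF assms(1)] algebra_simps)
  have "Im (ipF (T x) y) + Im (ipF (T y) x) = 0"
    using assms(2)[of "x + y"] assms(2)[of x] assms(2)[of y] unfolding e1 by simp
  moreover have "Re (ipF (T x) y) - Re (ipF (T y) x) = 0"
    using assms(2)[of "x + sb \<i> y"] assms(2)[of x] assms(2)[of y] unfolding e2 by simp
  ultimately show ?thesis by (simp add: complex_eq_iff)
qed

lemma pos_cs: assumes "lin T" "positive_op ipF T"
  shows "(cmod (ipF (T x) y))^2 \<le> Re (ipF (T x) x) * Re (ipF (T y) y)"
proof (rule real_quad_aux)
  have im: "\<And>x. Im (ipF (T x) x) = 0" and re: "\<And>x. Re (ipF (T x) x) \<ge> 0"
    using assms(2) by (auto simp: positive_op_def)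
  show "Re (ipF (T y) y) \<ge> 0" by (rule re)
  fix s :: real
  let ?t = "- complex_of_real s * ipF (T x) y"
  have "0 \<le> Re (ipF (T (x + sb ?t y)) (x + sb ?t y))" by (rule re)
  also have "ipF (T (x + sb ?t y)) (x + sb ?t y) = ipF (T x) x + cnj ?t * ipF (T x) y + ?t * ipF (T y) x + ?t * cnj ?t * ipF (T y) y"
    by (simp add: lin_add[OF assms(1)] lin_diff[OF assms(1)] lin_scale[OF assms(1)] algebra_simps)
  also have "Re \<dots> = Re (ipF (T x) x) - 2*s*(cmod (ipF (T x) y))^2 + s^2*(cmod (ipF (T x) y))^2*Re (ipF (T y) y)"
    apply (subst pos_herm[OF assms(1) im, of y x])
    using im[of y]
    apply (simp add: power2_eq_square algebra_simps)
    using cmod_power2[of "ipF (T x) y"] by (simp add: power2_eq_square algebra_simps)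
  finally show "0 \<le> Re (ipF (T x) x) - 2*s*(cmod (ipF (T x) y))^2 + s^2*(cmod (ipF (T x) y))^2*Re (ipF (T y) y)" .
qed simp

lemma pos_bound: assumes "lin T" "positive_op ipF T" "\<And>x. Re (ipF (T x) x) \<le> L * (nm x)^2"
  shows "(nm (T x))^2 \<le> L * Re (ipF (T x) x)"
proof -
  have re: "\<And>x. Re (ipF (T x) x) \<ge> 0" using assms(2) by (auto simp: positive_op_def)
  have "(cmod (ipF (T x) (T x)))^2 \<le> Re (ipF (T x) x) * Re (ipF (T (T x)) (T x))" by (rule pos_cs[OF assms(1,2)])
  also have "\<dots> \<le> Re (ipF (T x) x) * (L * (nm (T x))^2)" by (rule mult_left_mono[OF assms(3) re])
  finally have "((nm (T x))^2)^2 \<le> (L * Re (ipF (T x) x)) * (nm (T x))^2"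
    by (simp add: cm_self algebra_simps)
  hence *: "(nm (T x))^2 * (nm (T x))^2 \<le> (L * Re (ipF (T x) x)) * (nm (T x))^2" by (simp add: power2_eq_square)
  show ?thesis
  proof (cases "nm (T x) = 0")
    case True
    have "0 \<le> L * Re (ipF (T x) x)"
    proof (cases "L \<ge> 0")
      case True thus ?thesis using re[of x] by simp
    next
      case False
      have "Re (ipF (T x) x) \<le> 0" using assms(3)[of x] False
        by (smt (verit) mult_nonneg_nonneg mult_nonpos_nonneg zero_le_power2)
      hence "Re (ipF (T x) x) = 0" using re[of x] by simp
      thus ?thesis by simp
    qed
    thus ?thesis using True by simp
  next
    case False
    hence "(nm (T x))^2 > 0" using nm_ge0[of "T x"] by simp
    thus ?thesis using mult_right_le_imp_le[OF *] by blast
  qed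
qed

lemma pos_bound': assumes "lin T" "positive_op ipF T" "\<And>x. Re (ipF (T x) x) \<le> L * (nm x)^2" "L \<ge> 0"
  shows "nm (T x) \<le> L * nm x"
proof -
  have "(nm (T x))^2 \<le> L * Re (ipF (T x) x)" by (rule pos_bound[OF assms(1-3)])
  also have "\<dots> \<le> L * (L * (nm x)^2)" by (rule mult_left_mono[OF assms(3) assms(4)])
  finally have "(nm (T x))^2 \<le> (L * nm x)^2" by (simp add: power2_eq_square algebra_simps)
  thus ?thesis by (rule power2_le_imp_le) (simp add: assms(4))
qed

lemma pos_zero: assumes "lin T" "positive_op ipF T" "Re (ipF (T y) y) = 0" shows "T y = 0"
proof -
  have "(cmod (ipF (T y) (T y)))^2 \<le> Re (ipF (T y) y) * Re (ipF (T (T y)) (T y))" by (rule pos_cs[OF assms(1,2)])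
  hence "ipF (T y) (T y) = 0" using assms(3) by simp
  thus ?thesis by (rule ip_self_eq0)
qed

lemma conv_cdiff: "hconv ipF s L \<Longrightarrow> hconv ipF (\<lambda>k. c - s k) (c - L)"
  unfolding hconv_def by (simp add: nm_diff_comm[of L])

lemma nm_diff_sq: "(nm (a - b))^2 = (nm a)^2 - 2 * Re (ipF a b) + (nm b)^2"
  using nm_add_sq[of a "-b"] by simp

lemma two_scale: "sb 2 x = x + x"
proof -
  have "sb (1 + 1) x = x + x" by (simp only: V.scale_left_distrib V.scale_one)
  thus ?thesis by simp
qed

lemma riesz:
  fixes \<psi> :: "'b \<Rightarrow> complex"
  assumes add: "\<And>u v. \<psi> (u + v) = \<psi> u + \<psi> v" and sc: "\<And>a u. \<psi> (sb a u) = a * \<psi> u"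
    and bd: "\<And>u. cmod (\<psi> u) \<le> K * nm u" and K: "K \<ge> 0"
  shows "\<exists>k. (\<forall>u. \<psi> u = ipF u k) \<and> nm k \<le> K"
proof (cases "\<forall>u. \<psi> u = 0")
  case True then show ?thesis by (intro exI[of _ 0]) (simp add: K)
next
  case False
  then obtain x0 where x0: "\<psi> x0 \<noteq> 0" by auto
  have psi0: "\<psi> 0 = 0" using add[of 0 0] by simp
  have psi_diff: "\<psi> (u - v) = \<psi> u - \<psi> v" for u v using add[of "u - v" v] by (simp add: eq_diff_eq)
  define W where "W = {w. \<psi> w = 0}"
  define F where "F = (\<lambda>w. (nm (x0 - w))^2) ` W"
  define D where "D = Inf F"
  have bdd: "bdd_below F" unfolding F_def by (rule bdd_belowI[of _ 0]) auto
  have ne: "F \<noteq> {}" using psi0 by (auto simp: W_def F_def)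
  have Dle: "D \<le> (nm (x0 - w))^2" if "w \<in> W" for w
    unfolding D_def by (rule cInf_lower[OF _ bdd]) (use that in \<open>auto simp: F_def\<close>)
  have "\<exists>w\<in>W. (nm (x0 - w))^2 < D + inverse (real (Suc n))" for n
  proof -
    have "Inf F < D + inverse (real (Suc n))" by (simp add: D_def)
    from cInf_lessD[OF ne this] show ?thesis by (auto simp: F_def)
  qed
  then obtain w where wW: "\<And>n. w n \<in> W" and wlt: "\<And>n. (nm (x0 - w n))^2 < D + inverse (real (Suc n))"
    by metis
  have mid: "\<psi> (sb (1/2) (w n + w m)) = 0" for n m using wW[of n] wW[of m] by (simp add: add sc W_def)
  have par: "(nm (w n - w m))^2 \<le> 2 * inverse (real (Suc n)) + 2 * inverse (real (Suc m))" for n m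
  proof -
    let ?a = "x0 - w n" and ?b = "x0 - w m"
    have e1: "?a - ?b = w m - w n" by simp
    have e2: "?a + ?b = sb 2 (x0 - sb (1/2) (w n + w m))"
      by (simp add: V.scale_right_diff_distrib two_scale algebra_simps)
    have "(nm (?a + ?b))^2 = 4 * (nm (x0 - sb (1/2) (w n + w m)))^2"
      unfolding e2 nm_scale by (simp add: power_mult_distrib)
    also have "\<dots> \<ge> 4 * D" using Dle[of "sb (1/2) (w n + w m)"] mid[of n m] by (simp add: W_def)
    finally have "(nm (?a + ?b))^2 \<ge> 4 * D" .
    moreover have "(nm (?a + ?b))^2 + (nm (?a - ?b))^2 = 2 * (nm ?a)^2 + 2 * (nm ?b)^2"
      using nm_add_sq[of ?a ?b] nm_diff_sq[of ?a ?b] by linarith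
    moreover note wlt[of n] wlt[of m]
    ultimately have "(nm (w m - w n))^2 \<le> 2 * inverse (real (Suc n)) + 2 * inverse (real (Suc m))"
      unfolding e1 by linarith
    thus ?thesis by (simp add: nm_diff_comm[of "w n"])
  qed
  have cauchy: "\<forall>e>0. \<exists>N. \<forall>k\<ge>N. \<forall>m\<ge>N. nm (w k - w m) < e"
  proof (intro allI impI)
    fix e :: real assume e: "e > 0"
    obtain N :: nat where N: "4 / e^2 < real N" using reals_Archimedean2 by blast
    show "\<exists>N. \<forall>k\<ge>N. \<forall>m\<ge>N. nm (w k - w m) < e"
    proof (intro exI allI impI)
      fix k m assume km: "N \<le> k" "N \<le> m"
      have i1: "inverse (real (Suc k)) \<le> inverse (real (Suc N))" using km by (simp add: le_imp_inverse_le)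
      have i2: "inverse (real (Suc m)) \<le> inverse (real (Suc N))" using km by (simp add: le_imp_inverse_le)
      have "4 / e^2 < real (Suc N)" using N by simp
      hence "4 * inverse (real (Suc N)) < e^2" using e by (simp add: field_simps)
      hence "(nm (w k - w m))^2 < e^2" using par[of k m] i1 i2 by linarith
      thus "nm (w k - w m) < e" using e by (simp add: power_less_imp_less_base)
    qed
  qed
  obtain w0 where w0: "hconv ipF w w0" using complete[OF cauchy] by blast
  have "cmod (\<psi> w0) \<le> 0"
  proof (rule LIMSEQ_le_const)
    show "(\<lambda>n. K * nm (w n - w0)) \<longlonglongrightarrow> 0"
      using w0 tendsto_mult_right_zero[of "\<lambda>n. nm (w n - w0)" sequentially K] by (simp add: hconv_def)
    show "\<exists>N. \<forall>n\<ge>N. cmod (\<psi> w0) \<le> K * nm (w n - w0)"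
    proof (intro exI allI impI)
      fix n
      have "\<psi> w0 = - \<psi> (w n - w0)" using wW[of n] by (simp add: psi_diff W_def)
      hence "cmod (\<psi> w0) = cmod (\<psi> (w n - w0))" by simp
      thus "cmod (\<psi> w0) \<le> K * nm (w n - w0)" using bd by simp
    qed
  qed
  hence w0W: "\<psi> w0 = 0" by simp
  define z where "z = x0 - w0"
  have zD: "(nm z)^2 \<le> D"
  proof (rule LIMSEQ_le)
    show "(\<lambda>n. (nm (x0 - w n))^2) \<longlonglongrightarrow> (nm z)^2"
      unfolding z_def by (intro tendsto_power conv_nm conv_cdiff w0)
    show "(\<lambda>n. D + inverse (real (Suc n))) \<longlonglongrightarrow> D"
      using tendsto_add[OF tendsto_const LIMSEQ_inverse_real_of_nat, of D] by simp
    show "\<exists>N. \<forall>n\<ge>N. (nm (x0 - w n))^2 \<le> D + inverse (real (Suc n))"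
      using wlt less_imp_le by blast
  qed
  have orth: "ipF z v = 0" if vW: "\<psi> v = 0" for v
  proof -
    let ?c = "ipF z v"
    define s where "s = 1 / ((nm v)^2 + 1)"
    have "(nm v)^2 + 1 > 0" by (rule add_nonneg_pos) auto
    hence s0: "s > 0" by (simp add: s_def)
    have s1: "s * (nm v)^2 < 1" using \<open>(nm v)^2 + 1 > 0\<close> by (simp add: s_def field_simps)
    let ?t = "complex_of_real s * ?c"
    have "\<psi> (w0 + sb ?t v) = 0" using w0W vW by (simp add: add sc)
    hence "D \<le> (nm (x0 - (w0 + sb ?t v)))^2" using Dle by (simp add: W_def)
    also have "x0 - (w0 + sb ?t v) = z - sb ?t v" by (simp add: z_def algebra_simps)
    also have "(nm (z - sb ?t v))^2 = (nm z)^2 - 2 * s * (cmod ?c)^2 + s^2 * (cmod ?c)^2 * (nm v)^2"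
    proof -
      have r: "Re (ipF z (sb ?t v)) = s * (cmod ?c)^2"
        using cmod_power2[of ?c] by (simp add: power2_eq_square algebra_simps)
      have n: "cmod ?t = s * cmod ?c" using s0 by (simp add: norm_mult)
      show ?thesis unfolding nm_diff_sq nm_scale r n by (simp add: power_mult_distrib)
    qed
    finally have "0 \<le> s * (cmod ?c)^2 * (s * (nm v)^2 - 2)" using zD by (simp add: algebra_simps power2_eq_square)
    moreover have "s * (nm v)^2 - 2 < 0" using s1 by simp
    moreover have P: "s * (cmod ?c)^2 \<ge> 0" using s0 by simp
    ultimately have "s * (cmod ?c)^2 = 0" using mult_pos_neg[of "s * (cmod ?c)^2" "s * (nm v)^2 - 2"] by force
    hence "(cmod ?c)^2 = 0" using s0 by simp
    thus ?thesis by simp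
  qed
  have psiz: "\<psi> z = \<psi> x0" by (simp add: z_def psi_diff w0W)
  hence z0: "z \<noteq> 0" using x0 psi0 by auto
  hence nz: "nm z > 0" using nm_eq0[of z] nm_ge0[of z] by linarith
  define k where "k = sb (cnj (\<psi> z) / complex_of_real ((nm z)^2)) z"
  have rep: "\<psi> u = ipF u k" for u
  proof -
    let ?v = "u - sb (\<psi> u / \<psi> z) z"
    have "\<psi> ?v = 0" using psiz x0 by (simp add: psi_diff sc)
    hence "ipF z ?v = 0" by (rule orth)
    hence "ipF ?v z = 0" by (subst ip_cnj) simp
    hence "ipF u z = \<psi> u / \<psi> z * complex_of_real ((nm z)^2)" by (simp add: ip_self)
    thus ?thesis using psiz x0 nz by (simp add: k_def)
  qed
  have "nm k = cmod (\<psi> z) / (nm z)^2 * nm z" by (simp add: k_def norm_divide norm_power)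
  also have "\<dots> = cmod (\<psi> z) / nm z" using nz by (simp add: power2_eq_square)
  also have "\<dots> \<le> K" using bd[of z] nz by (simp add: divide_le_eq)
  finally show ?thesis using rep by blast
qed

end


primrec pk :: "nat \<Rightarrow> real poly" where
  "pk 0 = 0"
| "pk (Suc k) = smult (1/2) ([:0,1:] + pk k * pk k)"

definition nonneg :: "real poly \<Rightarrow> bool" where "nonneg p \<longleftrightarrow> (\<forall>m. coeff p m \<ge> 0)"

lemma nonneg_add: "nonneg p \<Longrightarrow> nonneg q \<Longrightarrow> nonneg (p + q)" by (simp add: nonneg_def)
lemma nonneg_mult: "nonneg p \<Longrightarrow> nonneg q \<Longrightarrow> nonneg (p * q)"
  by (auto simp: nonneg_def coeff_mult intro!: sum_nonneg)
lemma nonneg_smult: "r \<ge> 0 \<Longrightarrow> nonneg p \<Longrightarrow> nonneg (smult r p)" by (simp add: nonneg_def)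
lemma nonneg_X: "nonneg [:0,1:]" by (auto simp: nonneg_def coeff_pCons split: nat.split)
lemma nonneg_0: "nonneg 0" by (simp add: nonneg_def)
lemma nonneg_pCons[simp]: "nonneg (pCons c p) \<longleftrightarrow> c \<ge> 0 \<and> nonneg p"
  by (auto simp: nonneg_def coeff_pCons split: nat.split)

lemma pk_nonneg: "nonneg (pk k) \<and> nonneg (pk (Suc k) - pk k)"
proof (induct k)
  case 0 show ?case by (simp add: nonneg_0 nonneg_smult nonneg_X)
next
  case (Suc k)
  have a: "nonneg (pk (Suc k))"
    using nonneg_add[of "pk k" "pk (Suc k) - pk k"] Suc by simp
  have "pk (Suc (Suc k)) - pk (Suc k) = smult (1/2) ((pk (Suc k) + pk k) * (pk (Suc k) - pk k))"
    by (simp add: algebra_simps smult_add_right smult_diff_right)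
  moreover have "nonneg \<dots>"
    using Suc a by (intro nonneg_smult nonneg_mult nonneg_add) auto
  ultimately show ?case using a by simp
qed

lemma pk_mono: "k \<le> m \<Longrightarrow> nonneg (pk m - pk k)"
proof (induct m rule: dec_induct)
  case base show ?case by (simp add: nonneg_0)
next
  case (step n)
  have "pk (Suc n) - pk k = (pk n - pk k) + (pk (Suc n) - pk n)" by simp
  thus ?case using step pk_nonneg[of n] nonneg_add by metis
qed

locale sq = hs +
  fixes T :: "'a \<Rightarrow> 'a" and a K :: real
  assumes linT: "Vector_Spaces.linear sb sb T" and posT: "positive_op ipF T"
    and lowT: "\<And>x. a * (hnorm ipF x)^2 \<le> Re (ipF (T x) x)" and bndT: "\<And>x. hnorm ipF (T x) \<le> K * hnorm ipF x"
    and a0: "a > 0" and aK: "a \<le> K"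
begin

lemma K0: "K > 0" using a0 aK by simp

definition cc :: real where "cc = a / K^2"
lemma cc0: "cc > 0" using a0 K0 by (simp add: cc_def)

definition Bop :: "'a \<Rightarrow> 'a" where "Bop x = x - sb (complex_of_real cc) (T x)"

lemma lin_Bop: "lin Bop"
  by (rule lin_intro) (simp_all add: Bop_def lin_add[OF linT] lin_scale[OF linT] V.scale_right_distrib
      V.scale_right_diff_distrib algebra_simps)

lemma T_up: "Re (ipF (T x) x) \<le> K * (nm x)^2"
proof -
  have "Re (ipF (T x) x) \<le> cmod (ipF (T x) x)" by (rule complex_Re_le_cmod)
  also have "\<dots> \<le> nm (T x) * nm x" by (rule cs)
  also have "\<dots> \<le> K * nm x * nm x" by (rule mult_right_mono[OF bndT]) simp
  finally show ?thesis by (simp add: power2_eq_square mult.assoc)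
qed

lemma Bop_ip: "ipF (Bop x) x = ipF x x - complex_of_real cc * ipF (T x) x"
  by (simp add: Bop_def)

lemma pos_Bop: "positive_op ipF Bop"
  unfolding positive_op_def
proof
  fix x
  have im: "Im (ipF (T x) x) = 0" using posT by (simp add: positive_op_def)
  have "cc * Re (ipF (T x) x) \<le> cc * (K * (nm x)^2)" by (rule mult_left_mono[OF T_up]) (use cc0 in simp)
  also have "\<dots> = (a / K) * (nm x)^2" using K0 by (simp add: cc_def power2_eq_square)
  also have "\<dots> \<le> 1 * (nm x)^2" by (rule mult_right_mono) (use K0 aK in simp_all)
  finally show "Im (ipF (Bop x) x) = 0 \<and> 0 \<le> Re (ipF (Bop x) x)"
    using im by (simp add: Bop_ip nm_sq)
qed

lemma Bop_bnd: "nm (Bop x) \<le> nm x"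
proof -
  have re: "Re (ipF x (sb (complex_of_real cc) (T x))) = cc * Re (ipF (T x) x)"
    by (subst ip_cnj) simp
  have "(nm (Bop x))^2 = (nm x)^2 - 2 * (cc * Re (ipF (T x) x)) + cc^2 * (nm (T x))^2"
    unfolding Bop_def nm_diff_sq re using cc0 by (simp add: power_mult_distrib)
  also have "\<dots> \<le> (nm x)^2 - 2 * (cc * (a * (nm x)^2)) + cc^2 * (K * nm x)^2"
  proof -
    have "cc * (a * (nm x)^2) \<le> cc * Re (ipF (T x) x)" by (rule mult_left_mono[OF lowT]) (use cc0 in simp)
    moreover have "(nm (T x))^2 \<le> (K * nm x)^2" by (rule power_mono[OF bndT]) simp
    hence "cc^2 * (nm (T x))^2 \<le> cc^2 * (K * nm x)^2" by (rule mult_left_mono) simp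
    ultimately show ?thesis by linarith
  qed
  also have "\<dots> = (nm x)^2 * (1 - a^2 / K^2)" using K0 by (simp add: cc_def field_simps power2_eq_square)
  also have "\<dots> \<le> (nm x)^2 * 1"
    by (rule mult_left_mono) (use K0 in simp_all)
  finally have "(nm (Bop x))^2 \<le> (nm x)^2" by simp
  thus ?thesis by (rule power2_le_imp_le) simp
qed

lemma Bop_herm: "ipF (Bop x) y = ipF x (Bop y)"
proof -
  have "ipF (Bop x) y = cnj (ipF (Bop y) x)"
    by (rule pos_herm[OF lin_Bop]) (use pos_Bop in \<open>simp add: positive_op_def\<close>)
  also have "\<dots> = ipF x (Bop y)" by (subst (2) ip_cnj) simp
  finally show ?thesis .
qed

lemma Bop_comm: assumes "lin L" "\<And>x. L (T x) = T (L x)" shows "L (Bop x) = Bop (L x)"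
  by (simp add: Bop_def lin_diff[OF assms(1)] lin_scale[OF assms(1)] assms(2))

abbreviation Bp :: "nat \<Rightarrow> 'a \<Rightarrow> 'a" where "Bp m \<equiv> Bop ^^ m"

lemma lin_Bp: "lin (Bp m)"
proof (induct m)
  case 0 show ?case using lin_id by (simp add: id_def)
next
  case (Suc m) show ?case using lin_comp[OF lin_Bop Suc] by (simp add: comp_def)
qed

lemma Bp_bnd: "nm (Bp m x) \<le> nm x"
  by (induct m) (auto intro: order_trans[OF Bop_bnd])

lemma Bp_herm: "ipF (Bp m x) y = ipF x (Bp m y)"
proof (induct m arbitrary: y)
  case 0 show ?case by simp
next
  case (Suc m)
  have "ipF (Bp (Suc m) x) y = ipF (Bp m x) (Bop y)" by (simp add: Bop_herm)
  also have "\<dots> = ipF x (Bp m (Bop y))" by (rule Suc)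
  also have "Bp m (Bop y) = Bp (Suc m) y" by (simp add: funpow_swap1)
  finally show ?case .
qed

lemma Bp_add: "Bp (m + l) x = Bp m (Bp l x)" by (simp add: funpow_add)

lemma Bp_pos: "Im (ipF (Bp m x) x) = 0 \<and> Re (ipF (Bp m x) x) \<ge> 0"
proof -
  have "\<exists>l. m = 2 * l \<or> m = Suc (2 * l)" by presburger
  then obtain l where "m = 2 * l \<or> m = Suc (2 * l)" by blast
  thus ?thesis
  proof
    assume m: "m = 2 * l"
    have "ipF (Bp m x) x = ipF (Bp l (Bp l x)) x" using Bp_add[of l l x] by (simp add: m mult_2)
    also have "\<dots> = ipF (Bp l x) (Bp l x)" by (rule Bp_herm)
    finally show ?thesis by (simp add: ip_self_Re)
  next
    assume m: "m = Suc (2 * l)"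
    have "Bp m x = Bp l (Bop (Bp l x))"
      using Bp_add[of l "Suc l" x] by (simp add: m mult_2)
    hence "ipF (Bp m x) x = ipF (Bop (Bp l x)) (Bp l x)" by (simp add: Bp_herm)
    thus ?thesis using pos_Bop by (simp add: positive_op_def)
  qed
qed

lemma Bp_comm: assumes "lin L" "\<And>x. L (T x) = T (L x)" shows "L (Bp m x) = Bp m (L x)"
  by (induct m) (simp_all add: Bop_comm[OF assms])

definition peval :: "real poly \<Rightarrow> 'a \<Rightarrow> 'a" where
  "peval p x = (\<Sum>m<Suc (degree p). sb (complex_of_real (coeff p m)) (Bp m x))"

lemma peval_upto: "degree p < N \<Longrightarrow> peval p x = (\<Sum>m<N. sb (complex_of_real (coeff p m)) (Bp m x))"
proof (induct N)
  case 0 thus ?case by simp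
next
  case (Suc N)
  show ?case
  proof (cases "degree p < N")
    case True
    hence "coeff p N = 0" by (rule coeff_eq_0)
    thus ?thesis using Suc True by simp
  next
    case False
    hence "N = degree p" using Suc by simp
    thus ?thesis by (simp add: peval_def)
  qed
qed

lemma peval_pCons: "peval (pCons c p) x = sb (complex_of_real c) x + Bop (peval p x)"
proof -
  have "degree (pCons c p) < Suc (Suc (degree p))" using degree_pCons_le[of c p] by simp
  hence "peval (pCons c p) x = (\<Sum>m<Suc (Suc (degree p)). sb (complex_of_real (coeff (pCons c p) m)) (Bp m x))"
    by (rule peval_upto)
  also have "\<dots> = sb (complex_of_real c) x + (\<Sum>m<Suc (degree p). sb (complex_of_real (coeff p m)) (Bop (Bp m x)))"
    by (subst sum.lessThan_Suc_shift) simp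
  also have "(\<Sum>m<Suc (degree p). sb (complex_of_real (coeff p m)) (Bop (Bp m x))) = Bop (peval p x)"
    by (simp only: peval_def lin_sum[OF lin_Bop] lin_scale[OF lin_Bop])
  finally show ?thesis .
qed

lemma peval_0[simp]: "peval 0 x = 0" by (simp add: peval_def)

lemma lin_peval: "lin (peval p)"
proof (induct p)
  case 0 show ?case by (rule lin_intro) simp_all
next
  case (pCons c p)
  show ?case
    by (rule lin_intro) (simp_all add: peval_pCons lin_add[OF pCons(2)] lin_scale[OF pCons(2)]
        lin_add[OF lin_Bop] lin_scale[OF lin_Bop] V.scale_right_distrib algebra_simps)
qed

lemma peval_add: "peval (p + q) x = peval p x + peval q x"
proof (induct p arbitrary: q)
  case 0 show ?case by simp
next
  case (pCons c p)
  obtain d r where q: "q = pCons d r" by (rule pCons_cases)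
  show ?case
    by (simp add: q peval_pCons pCons(2) lin_add[OF lin_Bop] V.scale_left_distrib algebra_simps)
qed

lemma peval_smult: "peval (smult r p) x = sb (complex_of_real r) (peval p x)"
proof (induct p)
  case 0 show ?case by simp
next
  case (pCons c p)
  show ?case by (simp add: peval_pCons pCons(2) lin_scale[OF lin_Bop] V.scale_right_distrib)
qed

lemma peval_mult: "peval (p * q) x = peval p (peval q x)"
proof (induct p)
  case 0 show ?case by simp
next
  case (pCons c p)
  have "peval (pCons 0 (p * q)) x = Bop (peval (p * q) x)" by (simp add: peval_pCons)
  thus ?case by (simp add: peval_add peval_smult peval_pCons pCons(2) del: pCons_0_0)
qed

lemma peval_X: "peval [:0,1:] x = Bop x"
  by (simp add: peval_pCons lin_zero[OF lin_Bop])

lemma peval_diff: "peval (p - q) x = peval p x - peval q x"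
  using peval_add[of q "p - q" x] by (simp add: eq_diff_eq')

lemma peval_pos: assumes "nonneg p" shows "positive_op ipF (peval p)"
  unfolding positive_op_def
proof
  fix x
  have e: "ipF (peval p x) x = (\<Sum>m<Suc (degree p). complex_of_real (coeff p m) * ipF (Bp m x) x)"
    by (simp add: peval_def ip_sum_l)
  have "Im (ipF (peval p x) x) = 0" unfolding e using Bp_pos by simp
  moreover have "Re (ipF (peval p x) x) \<ge> 0" unfolding e using Bp_pos assms
    by (simp add: nonneg_def sum_nonneg)
  ultimately show "Im (ipF (peval p x) x) = 0 \<and> 0 \<le> Re (ipF (peval p x) x)" by simp
qed

lemma peval_comm: assumes "lin L" "\<And>x. L (T x) = T (L x)" shows "L (peval p x) = peval p (L x)"
  by (simp only: peval_def lin_sum[OF assms(1)] lin_scale[OF assms(1)] Bp_comm[OF assms])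

end


context sq
begin

abbreviation Y :: "nat \<Rightarrow> 'a \<Rightarrow> 'a" where "Y k \<equiv> peval (pk k)"

lemma Y_Suc: "Y (Suc k) x = sb (1/2) (Bop x + Y k (Y k x))"
  by (simp add: peval_smult peval_add peval_mult peval_X)

lemma lin_Y: "lin (Y k)" by (rule lin_peval)

lemma Y_bnd: "nm (Y k x) \<le> nm x"
proof (induct k arbitrary: x)
  case 0 show ?case by simp
next
  case (Suc k)
  have "nm (Y (Suc k) x) = cmod (1/2::complex) * nm (Bop x + Y k (Y k x))" by (simp only: Y_Suc nm_scale)
  also have "\<dots> = 1/2 * nm (Bop x + Y k (Y k x))" by simp
  also have "\<dots> \<le> 1/2 * (nm (Bop x) + nm (Y k (Y k x)))" using nm_triangle by simp
  also have "\<dots> \<le> 1/2 * (nm x + nm x)" using Bop_bnd[of x] Suc[of "Y k x"] Suc[of x] by simp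
  finally show ?case by simp
qed

lemma Y_pos: "positive_op ipF (Y k)" using pk_nonneg[of k] by (simp add: peval_pos)

lemma Y_re_le: "Re (ipF (Y k x) x) \<le> (nm x)^2"
proof -
  have "Re (ipF (Y k x) x) \<le> cmod (ipF (Y k x) x)" by (rule complex_Re_le_cmod)
  also have "\<dots> \<le> nm (Y k x) * nm x" by (rule cs)
  also have "\<dots> \<le> nm x * nm x" by (rule mult_right_mono[OF Y_bnd]) simp
  finally show ?thesis by (simp add: power2_eq_square)
qed

lemma Y_re_ge: "Re (ipF (Y k x) x) \<ge> 0" using Y_pos by (simp add: positive_op_def)

lemma D_pos: "k \<le> m \<Longrightarrow> positive_op ipF (\<lambda>x. Y m x - Y k x)"
proof -
  assume "k \<le> m"
  have "(\<lambda>x. Y m x - Y k x) = peval (pk m - pk k)" by (simp add: fun_eq_iff peval_diff)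
  thus ?thesis using peval_pos[OF pk_mono[OF \<open>k \<le> m\<close>]] by simp
qed

lemma lin_D: "lin (\<lambda>x. Y m x - Y k x)"
  by (rule lin_intro) (simp_all add: lin_add[OF lin_Y] lin_scale[OF lin_Y] V.scale_right_diff_distrib)

lemma D_bound: assumes "k \<le> m"
  shows "(nm (Y m x - Y k x))^2 \<le> Re (ipF (Y m x) x) - Re (ipF (Y k x) x)"
proof -
  have "(nm (Y m x - Y k x))^2 \<le> 1 * Re (ipF (Y m x - Y k x) x)"
  proof (rule pos_bound[OF lin_D D_pos[OF assms]])
    fix z show "Re (ipF (Y m z - Y k z) z) \<le> 1 * (nm z)^2"
      using Y_re_le[of m z] Y_re_ge[of k z] by simp
  qed
  thus ?thesis by simp
qed

lemma Y_cauchy: "\<forall>e>0. \<exists>N. \<forall>k\<ge>N. \<forall>m\<ge>N. nm (Y k x - Y m x) < e"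
proof (intro allI impI)
  fix e :: real assume e: "e > 0"
  let ?r = "\<lambda>k. Re (ipF (Y k x) x)"
  have mono: "\<forall>m n. m \<le> n \<longrightarrow> ?r m \<le> ?r n"
  proof (intro allI impI)
    fix m n :: nat assume "m \<le> n"
    have "0 \<le> Re (ipF (Y n x - Y m x) x)" using D_pos[OF \<open>m \<le> n\<close>] by (simp add: positive_op_def)
    thus "?r m \<le> ?r n" by simp
  qed
  have "Bseq ?r"
    by (rule BseqI'[of _ "(nm x)^2"]) (use Y_re_le Y_re_ge in auto)
  hence "convergent ?r" using Bseq_mono_convergent mono by blast
  hence "Cauchy ?r" by (rule convergent_Cauchy)
  then obtain N where N: "\<forall>m\<ge>N. \<forall>n\<ge>N. dist (?r m) (?r n) < e^2"
    using e unfolding Cauchy_def by (meson zero_less_power)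
  show "\<exists>N. \<forall>k\<ge>N. \<forall>m\<ge>N. nm (Y k x - Y m x) < e"
  proof (intro exI allI impI)
    fix k m assume km: "N \<le> k" "N \<le> m"
    have "(nm (Y k x - Y m x))^2 < e^2"
    proof (cases "k \<le> m")
      case True
      have "(nm (Y m x - Y k x))^2 \<le> ?r m - ?r k" by (rule D_bound[OF True])
      also have "\<dots> < e^2"
      proof -
        have "dist (?r m) (?r k) < e^2" using N km by blast
        thus ?thesis by (simp add: dist_real_def)
      qed
      finally show ?thesis by (simp add: nm_diff_comm)
    next
      case False
      have "(nm (Y k x - Y m x))^2 \<le> ?r k - ?r m" by (rule D_bound) (use False in simp)
      also have "\<dots> < e^2"
      proof -
        have "dist (?r k) (?r m) < e^2" using N km by blast
        thus ?thesis by (simp add: dist_real_def)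
      qed
      finally show ?thesis .
    qed
    thus "nm (Y k x - Y m x) < e" using e by (simp add: power_less_imp_less_base)
  qed
qed

definition Yl :: "'a \<Rightarrow> 'a" where "Yl x = (SOME L. hconv ipF (\<lambda>k. Y k x) L)"

lemma Yl_conv: "hconv ipF (\<lambda>k. Y k x) (Yl x)"
  unfolding Yl_def by (rule someI_ex) (rule complete[OF Y_cauchy])

lemma lin_Yl: "lin Yl"
proof (rule lin_intro)
  fix x y
  have "hconv ipF (\<lambda>k. Y k x + Y k y) (Yl x + Yl y)" by (intro conv_add Yl_conv)
  moreover have "(\<lambda>k. Y k x + Y k y) = (\<lambda>k. Y k (x + y))" by (simp add: lin_add[OF lin_Y])
  ultimately show "Yl (x + y) = Yl x + Yl y" using Yl_conv conv_unique by metis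
next
  fix c x
  have "hconv ipF (\<lambda>k. sb c (Y k x)) (sb c (Yl x))" by (intro conv_scale Yl_conv)
  moreover have "(\<lambda>k. sb c (Y k x)) = (\<lambda>k. Y k (sb c x))" by (simp add: lin_scale[OF lin_Y])
  ultimately show "Yl (sb c x) = sb c (Yl x)" using Yl_conv conv_unique by metis
qed

lemma Yl_bnd: "nm (Yl x) \<le> nm x"
  by (rule LIMSEQ_le_const2[OF conv_nm[OF Yl_conv]]) (use Y_bnd in blast)

lemma Yl_ip: "(\<lambda>k. ipF (Y k x) x) \<longlonglongrightarrow> ipF (Yl x) x" by (rule conv_ip[OF Yl_conv])

lemma Yl_pos: "positive_op ipF Yl"
  unfolding positive_op_def
proof
  fix x
  have "(\<lambda>k. Im (ipF (Y k x) x)) \<longlonglongrightarrow> Im (ipF (Yl x) x)" by (rule tendsto_Im[OF Yl_ip])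
  moreover have "(\<lambda>k. Im (ipF (Y k x) x)) = (\<lambda>k. 0)" using Y_pos by (simp add: positive_op_def)
  ultimately have "Im (ipF (Yl x) x) = 0" using LIMSEQ_unique tendsto_const by metis
  moreover have "Re (ipF (Yl x) x) \<ge> 0"
    by (rule LIMSEQ_le_const[OF tendsto_Re[OF Yl_ip]]) (use Y_re_ge in blast)
  ultimately show "Im (ipF (Yl x) x) = 0 \<and> 0 \<le> Re (ipF (Yl x) x)" by simp
qed

lemma Yl_comm: assumes "lin L" "\<And>x. nm (L x) \<le> KL * nm x" "\<And>x. L (T x) = T (L x)"
  shows "L (Yl x) = Yl (L x)"
proof -
  have "hconv ipF (\<lambda>k. L (Y k x)) (L (Yl x))" by (rule conv_lin[OF assms(1,2) Yl_conv])
  moreover have "(\<lambda>k. L (Y k x)) = (\<lambda>k. Y k (L x))" by (simp add: peval_comm[OF assms(1,3)])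
  ultimately show ?thesis using Yl_conv conv_unique by metis
qed

lemma Yl_fix: "Yl x = sb (1/2) (Bop x + Yl (Yl x))"
proof -
  have s2: "hconv ipF (\<lambda>k. Y k (Y k x)) (Yl (Yl x))"
    unfolding hconv_def
  proof (rule null_cmp)
    show "(\<lambda>k. nm (Y k x - Yl x) + nm (Y k (Yl x) - Yl (Yl x))) \<longlonglongrightarrow> 0"
      using tendsto_add[OF Yl_conv[of x, unfolded hconv_def] Yl_conv[of "Yl x", unfolded hconv_def]] by simp
    fix k
    have "Y k (Y k x) - Yl (Yl x) = Y k (Y k x - Yl x) + (Y k (Yl x) - Yl (Yl x))"
      by (simp add: lin_diff[OF lin_Y])
    hence "nm (Y k (Y k x) - Yl (Yl x)) \<le> nm (Y k (Y k x - Yl x)) + nm (Y k (Yl x) - Yl (Yl x))"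
      using nm_triangle by metis
    also have "\<dots> \<le> nm (Y k x - Yl x) + nm (Y k (Yl x) - Yl (Yl x))" using Y_bnd by simp
    finally show "norm (nm (Y k (Y k x) - Yl (Yl x))) \<le> nm (Y k x - Yl x) + nm (Y k (Yl x) - Yl (Yl x))"
      by simp
  qed
  have "hconv ipF (\<lambda>k. sb (1/2) (Bop x + Y k (Y k x))) (sb (1/2) (Bop x + Yl (Yl x)))"
    by (intro conv_scale conv_add conv_const s2)
  hence "hconv ipF (\<lambda>k. Y (Suc k) x) (sb (1/2) (Bop x + Yl (Yl x)))" by (simp only: Y_Suc)
  moreover have "hconv ipF (\<lambda>k. Y (Suc k) x) (Yl x)" by (rule conv_Suc[OF Yl_conv])
  ultimately show ?thesis using conv_unique by metis
qed

definition sc :: complex where "sc = complex_of_real (1 / sqrt cc)"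

definition Rt :: "'a \<Rightarrow> 'a" where "Rt x = sb sc (x - Yl x)"

lemma lin_Rt: "lin Rt"
  by (rule lin_intro) (simp_all add: Rt_def lin_add[OF lin_Yl] lin_scale[OF lin_Yl]
      V.scale_right_distrib V.scale_right_diff_distrib algebra_simps)

lemma Rt_sq: "Rt (Rt x) = T x"
proof -
  have f: "sb 2 (Yl x) = Bop x + Yl (Yl x)"
    by (subst Yl_fix) simp
  have "Rt (Rt x) = sb (sc * sc) (x - Yl x - Yl (x - Yl x))"
    by (simp add: Rt_def lin_scale[OF lin_Yl] lin_diff[OF lin_Yl] V.scale_right_diff_distrib)
  also have "x - Yl x - Yl (x - Yl x) = x - Bop x"
    using f by (simp add: lin_diff[OF lin_Yl] two_scale algebra_simps)
  also have "x - Bop x = sb (complex_of_real cc) (T x)" by (simp add: Bop_def)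
  also have "sb (sc * sc) (sb (complex_of_real cc) (T x)) = sb (sc * sc * complex_of_real cc) (T x)"
    by (simp add: mult.assoc)
  also have "sc * sc * complex_of_real cc = 1"
    using cc0 by (simp add: sc_def field_simps flip: of_real_mult)
  finally show ?thesis by simp
qed

lemma sc_real: "sc = complex_of_real (1 / sqrt cc)" by (simp add: sc_def)

lemma Rt_pos: "positive_op ipF Rt"
  unfolding positive_op_def
proof
  fix x
  have e: "ipF (Rt x) x = sc * (ipF x x - ipF (Yl x) x)" by (simp add: Rt_def)
  have im: "Im (ipF (Yl x) x) = 0" using Yl_pos by (simp add: positive_op_def)
  have "Re (ipF (Yl x) x) \<le> cmod (ipF (Yl x) x)" by (rule complex_Re_le_cmod)
  also have "\<dots> \<le> nm (Yl x) * nm x" by (rule cs)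
  also have "\<dots> \<le> nm x * nm x" by (rule mult_right_mono[OF Yl_bnd]) simp
  finally have re: "Re (ipF (Yl x) x) \<le> (nm x)^2" by (simp add: power2_eq_square)
  show "Im (ipF (Rt x) x) = 0 \<and> 0 \<le> Re (ipF (Rt x) x)"
    unfolding e sc_def using im re cc0 by (simp add: nm_sq)
qed

lemma Rt_bnd: "nm (Rt x) \<le> (2 / sqrt cc) * nm x"
proof -
  have "nm (Rt x) = (1 / sqrt cc) * nm (x - Yl x)" using cc0 by (simp add: Rt_def sc_def norm_divide)
  also have "\<dots> \<le> (1 / sqrt cc) * (nm x + nm x)"
    by (rule mult_left_mono) (use nm_diff_le[of x "Yl x"] Yl_bnd[of x] cc0 in auto)
  finally show ?thesis by simp
qed

lemma Rt_comm: assumes "lin L" "\<And>x. nm (L x) \<le> KL * nm x" "\<And>x. L (T x) = T (L x)"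
  shows "L (Rt x) = Rt (L x)"
  by (simp add: Rt_def lin_scale[OF assms(1)] lin_diff[OF assms(1)] Yl_comm[OF assms])

lemma Rt_herm: "ipF (Rt x) y = ipF x (Rt y)"
proof -
  have "ipF (Rt x) y = cnj (ipF (Rt y) x)"
    by (rule pos_herm[OF lin_Rt]) (use Rt_pos in \<open>simp add: positive_op_def\<close>)
  also have "\<dots> = ipF x (Rt y)" by (subst (2) ip_cnj) simp
  finally show ?thesis .
qed

lemma Rt_unique: assumes "bounded_op sb ipF R'" "positive_op ipF R'" "R' \<circ> R' = T"
  shows "R' = Rt"
proof
  fix x
  have linR: "lin R'" using assms(1) by (simp add: bounded_op_def)
  obtain KR where KR: "\<And>x. nm (R' x) \<le> KR * nm x" using assms(1) by (auto simp: bounded_op_def)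
  have RR: "R' (R' z) = T z" for z using fun_cong[OF assms(3), of z] by simp
  have cT: "R' (T z) = T (R' z)" for z using RR[of "R' z"] by (simp add: RR[symmetric])
  have cR: "R' (Rt z) = Rt (R' z)" for z by (rule Rt_comm[OF linR KR cT])
  define y where "y = Rt x - R' x"
  have "Rt y + R' y = 0"
    by (simp add: y_def lin_diff[OF lin_Rt] lin_diff[OF linR] Rt_sq RR cR)
  hence "ipF (Rt y) y + ipF (R' y) y = 0" using ip_add_l[of "Rt y" "R' y" y] by simp
  hence "Re (ipF (Rt y) y) + Re (ipF (R' y) y) = 0" by (metis plus_complex.sel(1) zero_complex.sel(1))
  moreover have "Re (ipF (Rt y) y) \<ge> 0" using Rt_pos by (simp add: positive_op_def)
  moreover have "Re (ipF (R' y) y) \<ge> 0" using assms(2) by (simp add: positive_op_def)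
  ultimately have "Re (ipF (Rt y) y) = 0" "Re (ipF (R' y) y) = 0" by linarith+
  hence z1: "Rt y = 0" and z2: "R' y = 0" using pos_zero[OF lin_Rt Rt_pos] pos_zero[OF linR assms(2)] by auto
  have hR: "ipF (R' x) y = ipF x (R' y)"
  proof -
    have "ipF (R' x) y = cnj (ipF (R' y) x)"
      by (rule pos_herm[OF linR]) (use assms(2) in \<open>simp add: positive_op_def\<close>)
    also have "\<dots> = ipF x (R' y)" by (subst (2) ip_cnj) simp
    finally show ?thesis .
  qed
  have "ipF y y = ipF (Rt x) y - ipF (R' x) y" by (simp add: y_def)
  also have "\<dots> = 0" using z1 z2 hR Rt_herm by simp
  finally have "y = 0" by (rule ip_self_eq0)
  thus "R' x = Rt x" by (simp add: y_def)
qed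

lemma pos_sqrt_eq: "pos_sqrt sb ipF T = Rt"
  unfolding pos_sqrt_def
proof (rule the_equality)
  show "bounded_op sb ipF Rt \<and> positive_op ipF Rt \<and> Rt \<circ> Rt = T"
  proof (intro conjI)
    show "bounded_op sb ipF Rt" unfolding bounded_op_def using lin_Rt Rt_bnd by blast
    show "positive_op ipF Rt" by (rule Rt_pos)
    show "Rt \<circ> Rt = T" by (simp add: fun_eq_iff Rt_sq)
  qed
next
  fix R' assume "bounded_op sb ipF R' \<and> positive_op ipF R' \<and> R' \<circ> R' = T"
  thus "R' = Rt" using Rt_unique by blast
qed

end


lemma polar_term:
  fixes u1 u2 v1 v2 :: complex
  shows "u1 * v2 = ((u1 + u2) * (v1 + v2) - (u1 - u2) * (v1 - v2) + \<i> * ((u1 + \<i> * u2) * (v1 - \<i> * v2))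
          - \<i> * ((u1 - \<i> * u2) * (v1 + \<i> * v2))) / 4"
  by (simp add: field_simps power2_eq_square)

lemma sum_comb4: "(\<Sum>i\<in>I. (a i - b i + \<i> * c i - \<i> * d i) / 4) = (sum a I - sum b I + \<i> * sum c I - \<i> * sum d I) / (4::complex)"
  by (simp add: sum_divide_distrib[symmetric] sum_subtractf sum.distrib sum_distrib_left)

lemma sum_split_lt: "(m::nat) \<le> k \<Longrightarrow> sum f {..<k} = sum f {..<m} + sum f {m..<k}"
  by (simp add: lessThan_atLeast0 sum.atLeastLessThan_concat)

locale fr = hs +
  fixes C :: "'a \<Rightarrow> 'a" and h :: "nat \<Rightarrow> 'a" and A B :: real
  assumes CGB: "C \<in> GB sb ipF" and A0: "0 < A" and AB: "A \<le> B"
    and fb: "ctrl_frame_bounds ipF C h A B"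
begin

lemma B0: "B > 0" using A0 AB by simp

lemma linC: "lin C" using CGB by (simp add: GB_def bounded_op_def)
lemma bijC: "bij C" using CGB by (simp add: GB_def)
lemma linCi: "lin (inv C)" using CGB by (simp add: GB_def bounded_op_def)

definition Kc :: real where "Kc = (SOME K. \<forall>x. nm (C x) \<le> K * nm x)"
lemma Kc: "nm (C x) \<le> Kc * nm x"
proof -
  have "\<exists>K. \<forall>x. nm (C x) \<le> K * nm x" using CGB by (simp add: GB_def bounded_op_def)
  from someI_ex[OF this] show ?thesis unfolding Kc_def by blast
qed

definition Ki :: real where "Ki = max 0 (SOME K. \<forall>x. nm (inv C x) \<le> K * nm x)"
lemma Ki: "nm (inv C x) \<le> Ki * nm x" and Ki0: "Ki \<ge> 0"
proof -
  have "\<exists>K. \<forall>x. nm (inv C x) \<le> K * nm x" using CGB by (simp add: GB_def bounded_op_def)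
  from someI_ex[OF this] have "nm (inv C x) \<le> (SOME K. \<forall>x. nm (inv C x) \<le> K * nm x) * nm x" by blast
  also have "\<dots> \<le> Ki * nm x" unfolding Ki_def by (rule mult_right_mono) auto
  finally show "nm (inv C x) \<le> Ki * nm x" .
  show "Ki \<ge> 0" by (simp add: Ki_def)
qed

definition Qv :: "'a \<Rightarrow> complex" where "Qv g = suminf (\<lambda>i. ipF g (h i) * ipF (C (h i)) g)"

lemma Q: "(\<lambda>i. ipF g (h i) * ipF (C (h i)) g) sums Qv g" "Im (Qv g) = 0"
  "A * (nm g)^2 \<le> Re (Qv g)" "Re (Qv g) \<le> B * (nm g)^2"
proof -
  obtain s where s: "(\<lambda>i. ipF g (h i) * ipF (C (h i)) g) sums s" "Im s = 0"
    "A * (nm g)^2 \<le> Re s" "Re s \<le> B * (nm g)^2"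
    using fb by (auto simp: ctrl_frame_bounds_def)
  have "s = Qv g" using s(1) by (simp add: Qv_def sums_unique)
  thus "(\<lambda>i. ipF g (h i) * ipF (C (h i)) g) sums Qv g" "Im (Qv g) = 0"
    "A * (nm g)^2 \<le> Re (Qv g)" "Re (Qv g) \<le> B * (nm g)^2" using s by auto
qed

lemma Q_cm: "cmod (Qv g) \<le> B * (nm g)^2"
proof -
  have "0 \<le> A * (nm g)^2" using A0 by simp
  hence "Re (Qv g) \<ge> 0" using Q(3)[of g] by linarith
  thus ?thesis using Q(2,4)[of g] by (simp add: cmod_eq_Re)
qed

definition Phi :: "nat \<Rightarrow> 'a \<Rightarrow> 'a \<Rightarrow> complex" where
  "Phi N g k = (\<Sum>i<N. ipF g (h i) * ipF (C (h i)) k)"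

definition Qlim :: "'a \<Rightarrow> 'a \<Rightarrow> complex" where
  "Qlim g k = (Qv (g + k) - Qv (g - k) + \<i> * Qv (g + sb \<i> k) - \<i> * Qv (g - sb \<i> k)) / 4"

lemma polar_ip: "ipF g u * ipF v k = (ipF (g + k) u * ipF v (g + k) - ipF (g - k) u * ipF v (g - k)
     + \<i> * (ipF (g + sb \<i> k) u * ipF v (g + sb \<i> k))
     - \<i> * (ipF (g - sb \<i> k) u * ipF v (g - sb \<i> k))) / 4"
proof -
  have e1: "ipF (g + k) u * ipF v (g + k) = (ipF g u + ipF k u) * (ipF v g + ipF v k)" by simp
  have e2: "ipF (g - k) u * ipF v (g - k) = (ipF g u - ipF k u) * (ipF v g - ipF v k)" by simp
  have e3: "ipF (g + sb \<i> k) u * ipF v (g + sb \<i> k) = (ipF g u + \<i> * ipF k u) * (ipF v g - \<i> * ipF v k)" by simp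
  have e4: "ipF (g - sb \<i> k) u * ipF v (g - sb \<i> k) = (ipF g u - \<i> * ipF k u) * (ipF v g + \<i> * ipF v k)" by simp
  show ?thesis unfolding e1 e2 e3 e4 by (rule polar_term)
qed

lemma Phi_polar: "Phi N g k = (Phi N (g + k) (g + k) - Phi N (g - k) (g - k) + \<i> * Phi N (g + sb \<i> k) (g + sb \<i> k)
   - \<i> * Phi N (g - sb \<i> k) (g - sb \<i> k)) / 4"
proof -
  have "Phi N g k = (\<Sum>i<N. (ipF (g + k) (h i) * ipF (C (h i)) (g + k) - ipF (g - k) (h i) * ipF (C (h i)) (g - k)
     + \<i> * (ipF (g + sb \<i> k) (h i) * ipF (C (h i)) (g + sb \<i> k))
     - \<i> * (ipF (g - sb \<i> k) (h i) * ipF (C (h i)) (g - sb \<i> k))) / 4)"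
    unfolding Phi_def
    by (rule sum.cong[OF refl]) (rule polar_ip)
  thus ?thesis unfolding sum_comb4 by (simp add: Phi_def)
qed

lemma Phi_lim: "(\<lambda>N. Phi N g k) \<longlonglongrightarrow> Qlim g k"
proof -
  have l: "(\<lambda>N. Phi N z z) \<longlonglongrightarrow> Qv z" for z
    using Q(1)[of z] by (simp add: sums_def Phi_def)
  show ?thesis
    unfolding Phi_polar[of _ g k] Qlim_def
    by (intro tendsto_intros l) simp
qed

lemma nm_plus_unit: "cmod c = 1 \<Longrightarrow> nm (g + sb c k) \<le> nm g + nm k"
  using nm_triangle[of g "sb c k"] by simp
lemma nm_minus_unit: "cmod c = 1 \<Longrightarrow> nm (g - sb c k) \<le> nm g + nm k"
  using nm_diff_le[of g "sb c k"] by simp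

lemma Qlim_bnd: "cmod (Qlim g k) \<le> B * (nm g + nm k)^2"
proof -
  let ?b = "B * (nm g + nm k)^2"
  have qb: "cmod (Qv z) \<le> ?b" if "nm z \<le> nm g + nm k" for z
  proof -
    have "cmod (Qv z) \<le> B * (nm z)^2" by (rule Q_cm)
    also have "\<dots> \<le> ?b" using that B0 by (intro mult_left_mono power_mono) auto
    finally show ?thesis .
  qed
  have b1: "cmod (Qv (g + k)) \<le> ?b" using qb nm_plus_unit[of 1 g k] by simp
  have b2: "cmod (Qv (g - k)) \<le> ?b" using qb nm_minus_unit[of 1 g k] by simp
  have b3: "cmod (Qv (g + sb \<i> k)) \<le> ?b" using qb nm_plus_unit[of \<i> g k] by simp
  have b4: "cmod (Qv (g - sb \<i> k)) \<le> ?b" using qb nm_minus_unit[of \<i> g k] by simp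
  have "cmod (Qv (g + k) - Qv (g - k) + \<i> * Qv (g + sb \<i> k) - \<i> * Qv (g - sb \<i> k))
     \<le> cmod (Qv (g + k)) + cmod (Qv (g - k)) + cmod (Qv (g + sb \<i> k)) + cmod (Qv (g - sb \<i> k))"
    by (rule order_trans[OF norm_triangle_ineq4], rule add_mono, rule order_trans[OF norm_triangle_ineq],
        rule add_mono, rule norm_triangle_ineq4) (simp_all add: norm_mult)
  also have "\<dots> \<le> 4 * ?b" using b1 b2 b3 b4 by simp
  finally show ?thesis by (simp add: Qlim_def norm_divide)
qed

definition bes :: "'a \<Rightarrow> nat \<Rightarrow> real" where "bes g i = (cmod (ipF g (h i)))^2"

definition LB :: real where "LB = B * (1 + Ki)^2"
lemma LB0: "LB \<ge> 0" using B0 by (simp add: LB_def)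

lemma bes_sums: "\<exists>l. bes g sums l \<and> l \<le> LB * (nm g)^2"
proof -
  have "cmod (ipF (inv C u) g) \<le> (Ki * nm g) * nm u" for u
  proof -
    have "cmod (ipF (inv C u) g) \<le> nm (inv C u) * nm g" by (rule cs)
    also have "\<dots> \<le> Ki * nm u * nm g" by (rule mult_right_mono[OF Ki]) simp
    finally show ?thesis by (simp add: algebra_simps)
  qed
  then obtain k where k: "\<And>u. ipF (inv C u) g = ipF u k" and nk: "nm k \<le> Ki * nm g"
    using riesz[of "\<lambda>u. ipF (inv C u) g" "Ki * nm g"] Ki0
    by (auto simp: lin_add[OF linCi] lin_scale[OF linCi])
  have injC: "inj C" using bijC bij_is_inj by blast
  have t: "ipF (h i) g = ipF (C (h i)) k" for i using k[of "C (h i)"] inv_f_f[OF injC] by simp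
  have "Phi N g k = complex_of_real (\<Sum>i<N. bes g i)" for N
    unfolding Phi_def bes_def of_real_sum
    by (rule sum.cong[OF refl]) (simp add: t[symmetric] ip_sq_norm)
  hence "(\<lambda>N. complex_of_real (\<Sum>i<N. bes g i)) \<longlonglongrightarrow> Qlim g k" using Phi_lim[of g k] by simp
  hence "(\<lambda>N. Re (complex_of_real (\<Sum>i<N. bes g i))) \<longlonglongrightarrow> Re (Qlim g k)" by (rule tendsto_Re)
  hence s: "bes g sums Re (Qlim g k)" by (simp add: sums_def)
  have "Re (Qlim g k) \<le> cmod (Qlim g k)" by (rule complex_Re_le_cmod)
  also have "\<dots> \<le> B * (nm g + nm k)^2" by (rule Qlim_bnd)
  also have "\<dots> \<le> B * (nm g + Ki * nm g)^2" using B0 nk by (intro mult_left_mono power_mono) auto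
  also have "\<dots> = LB * (nm g)^2" by (simp add: LB_def power2_eq_square algebra_simps)
  finally show ?thesis using s by blast
qed

lemma bes_summable: "summable (bes g)" using bes_sums[of g] sums_summable by blast

lemma bes_nonneg: "bes g i \<ge> 0" by (simp add: bes_def)

lemma bessel: "finite I \<Longrightarrow> (\<Sum>i\<in>I. bes g i) \<le> LB * (nm g)^2"
proof -
  assume I: "finite I"
  obtain l where l: "bes g sums l" "l \<le> LB * (nm g)^2" using bes_sums by blast
  have "(\<Sum>i\<in>I. bes g i) \<le> suminf (bes g)" by (rule sum_le_suminf[OF bes_summable I]) (simp add: bes_nonneg)
  also have "\<dots> = l" using l(1) by (simp add: sums_iff)
  finally show ?thesis using l(2) by simp
qed

definition P :: "nat set \<Rightarrow> 'a \<Rightarrow> 'a" where "P I x = (\<Sum>i\<in>I. sb (ipF x (h i)) (h i))"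

lemma lin_P: "lin (P I)"
  by (rule lin_intro) (simp_all add: P_def V.scale_left_distrib sum.distrib V.scale_sum_right)

lemma P_ip: "ipF (P I x) x = complex_of_real (\<Sum>i\<in>I. bes x i)"
  unfolding P_def ip_sum_l of_real_sum bes_def
  by (rule sum.cong[OF refl]) (simp add: ip_sq_norm)

lemma P_pos: "positive_op ipF (P I)"
  by (simp add: positive_op_def P_ip sum_nonneg bes_nonneg)

lemma P_bound: assumes "finite I" shows "(nm (P I x))^2 \<le> LB * (\<Sum>i\<in>I. bes x i)"
proof -
  have "(nm (P I x))^2 \<le> LB * Re (ipF (P I x) x)"
    by (rule pos_bound[OF lin_P P_pos]) (simp add: P_ip bessel[OF assms])
  thus ?thesis by (simp add: P_ip)
qed

abbreviation M :: "nat \<Rightarrow> 'a \<Rightarrow> 'a" where "M N \<equiv> P {..<N}"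

lemma M_cauchy: "\<forall>e>0. \<exists>N. \<forall>k\<ge>N. \<forall>m\<ge>N. nm (M k x - M m x) < e"
proof (intro allI impI)
  fix e :: real assume e: "e > 0"
  define e' where "e' = e^2 / (LB + 1)"
  have e'0: "e' > 0" using e LB0 by (simp add: e'_def)
  obtain N where N: "\<forall>m\<ge>N. \<forall>n. norm (sum (bes x) {m..<n}) < e'"
    using bes_summable[of x] e'0 unfolding summable_Cauchy by blast
  have key: "nm (M k x - M m x) < e" if "N \<le> m" "m \<le> k" for k m
  proof -
    have "M k x - M m x = P {m..<k} x" using that by (simp add: P_def sum_split_lt[of m k])
    hence "(nm (M k x - M m x))^2 \<le> LB * (\<Sum>i\<in>{m..<k}. bes x i)" using P_bound by simp
    also have "\<dots> \<le> LB * e'"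
      using N that LB0 by (intro mult_left_mono) (auto simp: sum_nonneg bes_nonneg less_imp_le)
    also have "\<dots> < e^2" using e LB0 by (simp add: e'_def field_simps)
    finally show ?thesis using e by (simp add: power_less_imp_less_base)
  qed
  show "\<exists>N. \<forall>k\<ge>N. \<forall>m\<ge>N. nm (M k x - M m x) < e"
  proof (intro exI allI impI)
    fix k m assume "N \<le> k" "N \<le> m"
    thus "nm (M k x - M m x) < e"
      using key[of m k] key[of k m] nm_diff_comm[of "M k x"] by (cases "m \<le> k") auto
  qed
qed

definition Ml :: "'a \<Rightarrow> 'a" where "Ml x = (SOME L. hconv ipF (\<lambda>N. M N x) L)"

lemma Ml_conv: "hconv ipF (\<lambda>N. M N x) (Ml x)"
  unfolding Ml_def by (rule someI_ex) (rule complete[OF M_cauchy])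

lemma lin_Ml: "lin Ml"
proof (rule lin_intro)
  fix x y
  have "hconv ipF (\<lambda>k. M k x + M k y) (Ml x + Ml y)" by (intro conv_add Ml_conv)
  moreover have "(\<lambda>k. M k x + M k y) = (\<lambda>k. M k (x + y))" by (simp add: lin_add[OF lin_P])
  ultimately show "Ml (x + y) = Ml x + Ml y" using Ml_conv conv_unique by metis
next
  fix c x
  have "hconv ipF (\<lambda>k. sb c (M k x)) (sb c (Ml x))" by (intro conv_scale Ml_conv)
  moreover have "(\<lambda>k. sb c (M k x)) = (\<lambda>k. M k (sb c x))" by (simp add: lin_scale[OF lin_P])
  ultimately show "Ml (sb c x) = sb c (Ml x)" using Ml_conv conv_unique by metis
qed

definition Sop :: "'a \<Rightarrow> 'a" where "Sop x = C (Ml x)"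

lemma partial_eq: "(\<Sum>i<N. sb (ipF x (h i)) (C (h i))) = C (M N x)"
  by (simp add: P_def lin_sum[OF linC] lin_scale[OF linC])

lemma Sop_conv: "hconv ipF (\<lambda>N. \<Sum>i<N. sb (ipF x (h i)) (C (h i))) (Sop x)"
  unfolding partial_eq Sop_def by (rule conv_lin[OF linC Kc Ml_conv])

lemma frame_op_eq: "ctrl_frame_op sb ipF C h = Sop"
proof
  fix x show "ctrl_frame_op sb ipF C h x = Sop x"
    unfolding ctrl_frame_op_def
  proof (rule the_equality)
    show "hconv ipF (\<lambda>N. \<Sum>i<N. sb (ipF x (h i)) (C (h i))) (Sop x)" by (rule Sop_conv)
    fix L assume "hconv ipF (\<lambda>N. \<Sum>i<N. sb (ipF x (h i)) (C (h i))) L"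
    thus "L = Sop x" using conv_unique Sop_conv by blast
  qed
qed

lemma Sop_Q: "ipF (Sop x) x = Qv x"
proof -
  have "(\<lambda>N. ipF (\<Sum>i<N. sb (ipF x (h i)) (C (h i))) x) \<longlonglongrightarrow> ipF (Sop x) x" by (rule conv_ip[OF Sop_conv])
  moreover have "(\<lambda>N. ipF (\<Sum>i<N. sb (ipF x (h i)) (C (h i))) x) = (\<lambda>N. \<Sum>i<N. ipF x (h i) * ipF (C (h i)) x)"
    by (simp add: ip_sum_l)
  moreover have "(\<lambda>N. \<Sum>i<N. ipF x (h i) * ipF (C (h i)) x) \<longlonglongrightarrow> Qv x" using Q(1)[of x] by (simp add: sums_def)
  ultimately show ?thesis using LIMSEQ_unique by metis
qed

lemma lin_Sop: "lin Sop" using lin_comp[OF linC lin_Ml] by (simp add: Sop_def[abs_def])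

lemma Sop_pos: "positive_op ipF Sop"
  unfolding positive_op_def Sop_Q
proof
  fix x
  have "0 \<le> A * (nm x)^2" using A0 by simp
  thus "Im (Qv x) = 0 \<and> 0 \<le> Re (Qv x)" using Q(2,3)[of x] by simp
qed

lemma Sop_bnd: "nm (Sop x) \<le> B * nm x"
  by (rule pos_bound'[OF lin_Sop Sop_pos]) (use Q(4) B0 in \<open>simp_all add: Sop_Q\<close>)

lemma Sop_low: "A * nm x \<le> nm (Sop x)"
proof -
  have "A * (nm x)^2 \<le> Re (ipF (Sop x) x)" using Q(3)[of x] by (simp add: Sop_Q)
  also have "\<dots> \<le> cmod (ipF (Sop x) x)" by (rule complex_Re_le_cmod)
  also have "\<dots> \<le> nm (Sop x) * nm x" by (rule cs)
  finally have *: "(A * nm x) * nm x \<le> nm (Sop x) * nm x" by (simp add: power2_eq_square mult.assoc)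
  show ?thesis
  proof (cases "nm x = 0")
    case True thus ?thesis by simp
  next
    case False
    hence "nm x > 0" using nm_ge0[of x] by linarith
    thus ?thesis using mult_right_le_imp_le[OF *] by blast
  qed
qed

lemma Sop_herm: "ipF (Sop x) y = ipF x (Sop y)"
proof -
  have "ipF (Sop x) y = cnj (ipF (Sop y) x)"
    by (rule pos_herm[OF lin_Sop]) (use Sop_pos in \<open>simp add: positive_op_def\<close>)
  also have "\<dots> = ipF x (Sop y)" by (subst (2) ip_cnj) simp
  finally show ?thesis .
qed

end


context fr
begin

lemma hilS: "hilbert_space sb (\<lambda>x y. ipF (Sop x) y)"
  unfolding hilbert_space_def
proof (intro conjI allI impI)
  show "vector_space sb" by (rule vs)
  fix x y show "ipF (Sop x) y = cnj (ipF (Sop y) x)"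
    by (rule pos_herm[OF lin_Sop]) (use Sop_pos in \<open>simp add: positive_op_def\<close>)
next
  fix c x y show "ipF (Sop (sb c x)) y = c * ipF (Sop x) y" by (simp add: lin_scale[OF lin_Sop])
next
  fix x x' y show "ipF (Sop (x + x')) y = ipF (Sop x) y + ipF (Sop x') y" by (simp add: lin_add[OF lin_Sop])
next
  fix x show "Im (ipF (Sop x) x) = 0" using Sop_pos by (simp add: positive_op_def)
  show "Re (ipF (Sop x) x) \<ge> 0" using Sop_pos by (simp add: positive_op_def)
next
  fix x assume "ipF (Sop x) x = 0"
  hence "A * (nm x)^2 \<le> 0" using Q(3)[of x] by (simp add: Sop_Q)
  hence "nm x = 0" using A0 by (simp add: mult_le_0_iff)
  thus "x = 0" by (simp add: nm_eq0)
next
  fix s :: "nat \<Rightarrow> 'a"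
  let ?n = "hnorm (\<lambda>x y. ipF (Sop x) y)"
  have nlow: "sqrt A * nm z \<le> ?n z" for z
  proof -
    have "A * (nm z)^2 \<le> Re (ipF (Sop z) z)" using Q(3)[of z] by (simp add: Sop_Q)
    hence "sqrt (A * (nm z)^2) \<le> sqrt (Re (ipF (Sop z) z))" by (rule real_sqrt_le_mono)
    moreover have "sqrt (A * (nm z)^2) = sqrt A * nm z" by (simp add: real_sqrt_mult)
    moreover have "sqrt (Re (ipF (Sop z) z)) = ?n z" by (simp add: hnorm_def)
    ultimately show ?thesis by simp
  qed
  have nup: "?n z \<le> sqrt B * nm z" for z
  proof -
    have "Re (ipF (Sop z) z) \<le> B * (nm z)^2" using Q(4)[of z] by (simp add: Sop_Q)
    hence "sqrt (Re (ipF (Sop z) z)) \<le> sqrt (B * (nm z)^2)" by (rule real_sqrt_le_mono)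
    moreover have "sqrt (B * (nm z)^2) = sqrt B * nm z" by (simp add: real_sqrt_mult)
    moreover have "sqrt (Re (ipF (Sop z) z)) = ?n z" by (simp add: hnorm_def)
    ultimately show ?thesis by simp
  qed
  assume c: "\<forall>e>0. \<exists>N. \<forall>k\<ge>N. \<forall>m\<ge>N. ?n (s k - s m) < e"
  have "\<forall>e>0. \<exists>N. \<forall>k\<ge>N. \<forall>m\<ge>N. nm (s k - s m) < e"
  proof (intro allI impI)
    fix e :: real assume e: "e > 0"
    then obtain N where N: "\<forall>k\<ge>N. \<forall>m\<ge>N. ?n (s k - s m) < sqrt A * e" using c A0 by (meson mult_pos_pos real_sqrt_gt_0_iff)
    show "\<exists>N. \<forall>k\<ge>N. \<forall>m\<ge>N. nm (s k - s m) < e"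
    proof (intro exI allI impI)
      fix k m assume "N \<le> k" "N \<le> m"
      hence "sqrt A * nm (s k - s m) < sqrt A * e" using N nlow[of "s k - s m"] by force
      thus "nm (s k - s m) < e" using A0 by simp
    qed
  qed
  then obtain L where L: "hconv ipF s L" using complete by blast
  have "hconv (\<lambda>x y. ipF (Sop x) y) s L"
    unfolding hconv_def
  proof (rule null_cmp)
    show "(\<lambda>k. sqrt B * nm (s k - L)) \<longlonglongrightarrow> 0"
      using L tendsto_mult_right_zero[of "\<lambda>k. nm (s k - L)" sequentially "sqrt B"] by (simp add: hconv_def)
    fix k
    have "Re (ipF (Sop (s k - L)) (s k - L)) \<ge> 0" using Sop_pos by (simp only: positive_op_def)
    hence "?n (s k - L) \<ge> 0" unfolding hnorm_def by (rule real_sqrt_ge_zero)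
    hence "norm (?n (s k - L)) = ?n (s k - L)" by simp
    thus "norm (?n (s k - L)) \<le> sqrt B * nm (s k - L)" using nup[of "s k - L"] by linarith
  qed
  thus "\<exists>L. hconv (\<lambda>x y. ipF (Sop x) y) s L" by blast
qed

lemma Sop_surj: "\<exists>x. Sop x = y"
proof -
  interpret S2: hs sb "\<lambda>x y. ipF (Sop x) y" by (rule hs.intro) (rule hilS)
  have "cmod (ipF u y) \<le> (nm y / sqrt A) * hnorm (\<lambda>x y. ipF (Sop x) y) u" for u
  proof -
    have "A * (nm u)^2 \<le> Re (ipF (Sop u) u)" using Q(3)[of u] by (simp add: Sop_Q)
    hence "sqrt (A * (nm u)^2) \<le> sqrt (Re (ipF (Sop u) u))" by (rule real_sqrt_le_mono)
    moreover have "sqrt (A * (nm u)^2) = sqrt A * nm u" by (simp add: real_sqrt_mult)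
    moreover have "sqrt (Re (ipF (Sop u) u)) = hnorm (\<lambda>x y. ipF (Sop x) y) u" by (simp add: hnorm_def)
    ultimately have "sqrt A * nm u \<le> hnorm (\<lambda>x y. ipF (Sop x) y) u" by simp
    hence nu: "nm u \<le> hnorm (\<lambda>x y. ipF (Sop x) y) u / sqrt A" using A0 by (simp add: field_simps)
    have "cmod (ipF u y) \<le> nm u * nm y" by (rule cs)
    also have "\<dots> \<le> hnorm (\<lambda>x y. ipF (Sop x) y) u / sqrt A * nm y" by (rule mult_right_mono[OF nu]) simp
    finally show ?thesis by (simp add: ac_simps)
  qed
  then obtain k where k: "\<And>u. ipF u y = ipF (Sop u) k"
    using S2.riesz[of "\<lambda>u. ipF u y" "nm y / sqrt A"] A0 by auto
  have "ipF (y - Sop k) (y - Sop k) = 0"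
    using k[of "y - Sop k"] by (simp add: Sop_herm)
  hence "y - Sop k = 0" by (rule ip_self_eq0)
  thus ?thesis by auto
qed

lemma Sop_inj: "inj Sop"
proof (rule injI)
  fix x x' assume "Sop x = Sop x'"
  hence "Sop (x - x') = 0" by (simp add: lin_diff[OF lin_Sop])
  hence "A * nm (x - x') \<le> 0" using Sop_low[of "x - x'"] by simp
  hence "nm (x - x') = 0" using A0 nm_ge0[of "x - x'"] by (simp add: mult_le_0_iff)
  thus "x = x'" by (simp add: nm_eq0)
qed

lemma Sop_bij: "bij Sop" using Sop_inj Sop_surj by (auto simp: bij_def surj_def) (metis)

definition Tinv :: "'a \<Rightarrow> 'a" where "Tinv = inv Sop"

lemma ST: "Sop (Tinv y) = y" unfolding Tinv_def by (meson Sop_bij bij_inv_eq_iff)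
lemma TS: "Tinv (Sop x) = x" unfolding Tinv_def by (rule inv_f_f[OF Sop_inj])

lemma lin_Tinv: "lin Tinv"
proof (rule lin_intro)
  fix x y show "Tinv (x + y) = Tinv x + Tinv y"
    using TS[of "Tinv x + Tinv y"] by (simp add: lin_add[OF lin_Sop] ST)
next
  fix c x show "Tinv (sb c x) = sb c (Tinv x)"
    using TS[of "sb c (Tinv x)"] by (simp add: lin_scale[OF lin_Sop] ST)
qed

lemma Tinv_bnd: "nm (Tinv y) \<le> (1 / A) * nm y"
  using Sop_low[of "Tinv y"] A0 by (simp add: ST field_simps)

lemma Tinv_ip: "ipF (Tinv y) y = Qv (Tinv y)"
proof -
  have "ipF (Tinv y) y = ipF (Tinv y) (Sop (Tinv y))" by (simp add: ST)
  also have "\<dots> = ipF (Sop (Tinv y)) (Tinv y)" by (simp add: Sop_herm)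
  finally show ?thesis by (simp add: Sop_Q)
qed

lemma Tinv_pos: "positive_op ipF Tinv"
  unfolding positive_op_def Tinv_ip
proof
  fix x
  have "0 \<le> A * (nm (Tinv x))^2" using A0 by simp
  thus "Im (Qv (Tinv x)) = 0 \<and> 0 \<le> Re (Qv (Tinv x))" using Q(2,3)[of "Tinv x"] by simp
qed

lemma Tinv_low: "(A / B^2) * (nm y)^2 \<le> Re (ipF (Tinv y) y)"
proof -
  have "nm y \<le> B * nm (Tinv y)" using Sop_bnd[of "Tinv y"] by (simp add: ST)
  hence "nm y / B \<le> nm (Tinv y)" using B0 by (simp add: field_simps)
  hence "(nm y / B)^2 \<le> (nm (Tinv y))^2" by (rule power_mono) (use B0 in simp)
  hence "A * (nm y / B)^2 \<le> A * (nm (Tinv y))^2" using A0 by simp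
  also have "\<dots> \<le> Re (ipF (Tinv y) y)" using Q(3)[of "Tinv y"] by (simp add: Tinv_ip)
  finally show ?thesis by (simp add: power_divide)
qed

lemma aK_ok: "A / B^2 \<le> 1 / A"
proof -
  have "A * A \<le> B * B" using A0 AB by (intro mult_mono) auto
  thus ?thesis using A0 B0 by (simp add: field_simps power2_eq_square)
qed

lemma sq_Tinv: "sq sb ipF Tinv (A / B^2) (1 / A)"
  by (rule sq.intro[OF hs_axioms], rule sq_axioms.intro)
     (use lin_Tinv Tinv_pos Tinv_low Tinv_bnd A0 B0 aK_ok in auto)

end

sublocale fr \<subseteq> sqT: sq sb ipF Tinv "A / B^2" "1 / A" by (rule sq_Tinv)

context fr
begin

lemma final:
  assumes comm: "inv (ctrl_frame_op sb ipF C h) \<circ> C = C \<circ> inv (ctrl_frame_op sb ipF C h)"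
  shows "ctrl_parseval_frame ipF C (pos_sqrt sb ipF (inv (ctrl_frame_op sb ipF C h)) \<circ> h)"
proof -
  have Teq: "inv (ctrl_frame_op sb ipF C h) = Tinv" by (simp add: frame_op_eq Tinv_def)
  have cT: "C (Tinv x) = Tinv (C x)" for x using fun_cong[OF comm, of x] by (simp add: Teq)
  have Req: "pos_sqrt sb ipF (inv (ctrl_frame_op sb ipF C h)) = sqT.Rt" by (simp add: Teq sqT.pos_sqrt_eq)
  have RC: "C (sqT.Rt x) = sqT.Rt (C x)" for x by (rule sqT.Rt_comm[OF linC Kc cT])
  have RT: "sqT.Rt (Tinv x) = Tinv (sqT.Rt x)" for x
    using sqT.Rt_sq[of "sqT.Rt x"] sqT.Rt_sq[of x] by metis
  have RS: "Sop (sqT.Rt x) = sqT.Rt (Sop x)" for x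
  proof -
    have "Sop (sqT.Rt x) = Sop (sqT.Rt (Tinv (Sop x)))" by (simp add: TS)
    also have "\<dots> = Sop (Tinv (sqT.Rt (Sop x)))" by (simp add: RT)
    finally show ?thesis by (simp add: ST)
  qed
  show ?thesis
    unfolding ctrl_parseval_frame_def ctrl_frame_bounds_def Req
  proof (intro allI)
    fix g
    have tm_eq: "ipF g (sqT.Rt (h i)) * ipF (C (sqT.Rt (h i))) g
        = ipF (sqT.Rt g) (h i) * ipF (C (h i)) (sqT.Rt g)" for i
      by (simp add: RC sqT.Rt_herm)
    have "(\<lambda>i. ipF g ((sqT.Rt \<circ> h) i) * ipF (C ((sqT.Rt \<circ> h) i)) g) sums Qv (sqT.Rt g)"
      using Q(1)[of "sqT.Rt g"] by (simp add: tm_eq)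
    moreover have "Qv (sqT.Rt g) = ipF g g"
    proof -
      have "Qv (sqT.Rt g) = ipF (Sop (sqT.Rt g)) (sqT.Rt g)" by (simp add: Sop_Q)
      also have "\<dots> = ipF (sqT.Rt (Sop (sqT.Rt g))) g" by (simp add: sqT.Rt_herm)
      also have "sqT.Rt (Sop (sqT.Rt g)) = Sop (sqT.Rt (sqT.Rt g))" by (simp add: RS)
      also have "\<dots> = g" by (simp add: sqT.Rt_sq ST)
      finally show ?thesis .
    qed
    ultimately have "(\<lambda>i. ipF g ((sqT.Rt \<circ> h) i) * ipF (C ((sqT.Rt \<circ> h) i)) g) sums ipF g g" by simp
    thus "\<exists>s. (\<lambda>i. ipF g ((sqT.Rt \<circ> h) i) * ipF (C ((sqT.Rt \<circ> h) i)) g) sums s \<and> Im s = 0 \<and>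
      1 * (hnorm ipF g)\<^sup>2 \<le> Re s \<and> Re s \<le> 1 * (hnorm ipF g)\<^sup>2"
      by (intro exI[of _ "ipF g g"]) (simp add: nm_sq)
  qed
qed

end

theorem theorem3p7:
  fixes sa :: "complex \<Rightarrow> 'a::ab_group_add \<Rightarrow> 'a"
    and n :: nat
    and ip :: "'a \<Rightarrow> 'a \<Rightarrow> 'a list \<Rightarrow> complex"
    and as :: "'a list"
    and sb :: "complex \<Rightarrow> 'b::ab_group_add \<Rightarrow> 'b"
    and ipF :: "'b \<Rightarrow> 'b \<Rightarrow> complex"
    and j :: "'a \<Rightarrow> 'b"
    and C :: "'b \<Rightarrow> 'b"
    and f :: "nat \<Rightarrow> 'a"
  assumes "n \<ge> 2"
    and "n_hilbert_space sa n ip"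
    and "length as = n - 1"
    and "HF_completion sa ip as sb ipF j"
    and "C \<in> GB sb ipF"
    and "ctrl_frame ipF C (j \<circ> f)"
    and "inv (ctrl_frame_op sb ipF C (j \<circ> f)) \<circ> C = C \<circ> inv (ctrl_frame_op sb ipF C (j \<circ> f))"
  shows "ctrl_parseval_frame ipF C
           (pos_sqrt sb ipF (inv (ctrl_frame_op sb ipF C (j \<circ> f))) \<circ> j \<circ> f)"
proof -
  have H: "hilbert_space sb ipF" using assms(4) by (simp add: HF_completion_def)
  obtain A B where AB: "0 < A" "A \<le> B" "ctrl_frame_bounds ipF C (j \<circ> f) A B"
    using assms(6) by (auto simp: ctrl_frame_def)
  interpret F: fr sb ipF C "j \<circ> f" A B
    by (rule fr.intro[OF hs.intro[OF H]], rule fr_axioms.intro) (use assms(5) AB in auto)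
  have "ctrl_parseval_frame ipF C (pos_sqrt sb ipF (inv (ctrl_frame_op sb ipF C (j \<circ> f))) \<circ> (j \<circ> f))"
    by (rule F.final[OF assms(7)])
  thus ?thesis by (simp add: comp_assoc)
qed

end
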